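(* For all $n\ge1$ and $p,q\ge0$, the following identities between operators on functions of $(x_0=s,\mathbf x,\mathbf t,\bar{\mathbf t})$ hold up to adding multiplication by a function from $\mathcal F$ (with $\partial_{x_0}=\partial_s$): $$[\partial_{t_n},D_p]=\begin{cases}\frac nk\partial_{t_{(p-1)k+n}},& p\ge1\text{ or }(p=0,\ n>k),\\ \frac nk(k-n)t_{k-n},& p=0,\ n<k,\\ x_0,& p=0,\ n=k,\end{cases}\qquad [D_p,t_n]=\begin{cases}\frac1k\partial_{t_{(p-1)k-n}},& n<(p-1)k,\\ \frac1k(n-(p-1)k)t_{n-(p-1)k},& n>(p-1)k,\\ \frac1kx_0,& n=(p-1)k,\end{cases}$$ $$[\partial_{\bar t_n},D_p]=\begin{cases}\frac nm\partial_{\bar t_{(p-1)m+n}},& p\ge1\text{ or }(p=0,\ n>m),\\ \frac nm(m-n)\bar t_{m-n},& p=0,\ n<m,\\ x_0,& p=0,\ n=m,\end{cases}\qquad [D_p,\bar t_n]=\begin{cases}\frac1m\partial_{\bar t_{(p-1)m-n}},& n<(p-1)m,\\ \frac1m(n-(p-1)m)\bar t_{n-(p-1)m},& n>(p-1)m,\\ \frac1mx_0,& n=(p-1)m,\end{cases}$$ $$[\partial_{x_q},D_p]=\begin{cases}q\partial_{x_{p+q-1}}+\frac1k\partial_{t_{(p+q-1)k}}+\frac1m\partial_{\bar t_{(p+q-1)m}},& p+q>1,\\ q\partial_{x_0}+(\frac1k+\frac1m)x_0,& p+q=1,\\ t_k+\bar t_m,& p=q=0,\end{cases}\qquad [D_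p,x_q]=0.$$
   Context: Fix positive integers $k,m$. Variables: $x_0=s$, $\mathbf x=(x_1,x_2,\dots)$, $\mathbf t=(t_1,t_2,\dots)$, $\bar{\mathbf t}=(\bar t_1,\bar t_2,\dots)$, all independent (in particular $t_{nk}$ and $\bar t_{nm}$ are distinct); $\partial_{x_0}=\partial_s$. $\mathcal F$ is the space of functions $f(s,\mathbf x)$ with $f(s+1,\mathbf x)=f(s,\mathbf x)$ (in particular $x_n\in\mathcal F$ for $n\ge1$). Define $D_0=\frac1k\sum_{n\ge1}\bigl(x_{n+1}\partial_{t_{nk}}+(n+k)t_{n+k}\partial_{t_n}\bigr)+\frac1{2k}\sum_{n=1}^{k-1}nt_n(k-n)t_{k-n}+\frac1m\sum_{n\ge1}\bigl(x_{n+1}\partial_{\bar t_{nm}}+(n+m)\bar t_{n+m}\partial_{\bar t_n}\bigr)+\frac1{2m}\sum_{n=1}^{m-1}n\bar t_n(m-n)\bar t_{m-n}+\sum_{n\ge1}nx_n\partial_{x_{n-1}}+(\frac1k+\frac1m)x_0x_1+x_0(t_k+\bar t_m)$; $D_1=\frac1k\sum_{n\ge1}(x_n\partial_{t_{nk}}+nt_n\partial_{t_n})+\frac1m\sum_{n\ge1}(x_n\partial_{\bar t_{nm}}+n\bar t_n\partial_{\bar t_n})+\sum_{n\ge1}nx_n\partial_{x_n}+(\frac1k+\frac1m)\frac{x_0^2}2$; for $p\ge1$: $D_{p+1}=\sum_{n\ge1}nx_n\partial_{x_{p+n}}+\frac1k\sum_{n\ge0}(x_n\partial_{t_{(p+n)k}}+nt_n\partial_{t_{pk+n}})+\frac1{2k}\sum_{n=1}^{pk-1}\partial_{t_n}\partial_{t_{pk-n}}+\frac1m\sum_{n\ge0}(x_n\partial_{\bar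 t_{(p+n)m}}+n\bar t_n\partial_{\bar t_{pm+n}})+\frac1{2m}\sum_{n=1}^{pm-1}\partial_{\bar t_n}\partial_{\bar t_{pm-n}}$. Brackets are commutators of operators; $t_n,\bar t_n,x_q$ denote multiplication operators. *)

theory Defs
  imports "HOL-Analysis.Analysis"
begin

text \<open>Variables: X 0 is x_0 = s, X n (n >= 1) is x_n, T n is t_n, TB n is bar t_n.
  T 0 and TB 0 are dummy variables (never used by the operators in an essential way,
  and excluded from the domain of functions considered).\<close>

datatype var = X nat | T nat | TB nat

type_synonym pt = "var \<Rightarrow> real"
type_synonym fn = "pt \<Rightarrow> real"
type_synonym oper = "fn \<Rightarrow> fn"

definition valid_var :: "var \<Rightarrow> bool" where
  "valid_var v \<longleftrightarrow> (case v of X n \<Rightarrow> True | T n \<Rightarrow> 1 \<le> n | TB n \<Rightarrow> 1 \<le> n)"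

definition depends_only :: "var set \<Rightarrow> fn \<Rightarrow> bool" where
  "depends_only V f \<longleftrightarrow> (\<forall>a b. (\<forall>v\<in>V. a v = b v) \<longrightarrow> f a = f b)"

definition pd :: "var \<Rightarrow> fn \<Rightarrow> fn" where
  "pd v f a = deriv (\<lambda>h. f (a(v := h))) (a v)"

fun pds :: "var list \<Rightarrow> fn \<Rightarrow> fn" where
  "pds [] f = f"
| "pds (v # vs) f = pd v (pds vs f)"

definition Dom :: "fn set" where
  "Dom = {f. (\<exists>V. finite V \<and> V \<subseteq> Collect valid_var \<and> depends_only V f) \<and>
              (\<forall>vs. continuous_on UNIV (pds vs f) \<and>
                    (\<forall>v a. (\<lambda>h. pds vs f (a(v := h))) differentiable (at (a v))))}"

definition Fsp :: "fn set" where
  "Fsp = {g. depends_only (range X) g \<and> (\<forall>a. g (a(X 0 := a (X 0) + 1)) = g a)}"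

definition modF :: "oper \<Rightarrow> oper \<Rightarrow> bool" where
  "modF A B \<longleftrightarrow> (\<exists>g\<in>Fsp. \<forall>f\<in>Dom. \<forall>a. A f a = B f a + g a * f a)"

definition comm :: "oper \<Rightarrow> oper \<Rightarrow> oper" where
  "comm A B = (\<lambda>f a. A (B f) a - B (A f) a)"

definition pdo :: "var \<Rightarrow> oper" where
  "pdo v = (\<lambda>f a. pd v f a)"

definition mulv :: "var \<Rightarrow> oper" where
  "mulv v = (\<lambda>f a. a v * f a)"

definition scaleo :: "real \<Rightarrow> oper \<Rightarrow> oper" where
  "scaleo c A = (\<lambda>f a. c * A f a)"

text \<open>Building blocks for the t-part (tv = T, kk = k) and bar t-part (tv = TB, kk = m).
  Sums over n >= 1 are written as suminf over n with index shifted by one.\<close>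
definition Tpart0 :: "(nat \<Rightarrow> var) \<Rightarrow> nat \<Rightarrow> oper" where
  "Tpart0 tv kk = (\<lambda>f a.
     1 / real kk * (\<Sum>n. a (X (n + 2)) * pd (tv ((n + 1) * kk)) f a
                       + real (n + 1 + kk) * a (tv (n + 1 + kk)) * pd (tv (n + 1)) f a)
     + 1 / (2 * real kk) * (\<Sum>n = 1..<kk. real n * a (tv n) * real (kk - n) * a (tv (kk - n))) * f a)"

definition Tpart1 :: "(nat \<Rightarrow> var) \<Rightarrow> nat \<Rightarrow> oper" where
  "Tpart1 tv kk = (\<lambda>f a.
     1 / real kk * (\<Sum>n. a (X (n + 1)) * pd (tv ((n + 1) * kk)) f a
                       + real (n + 1) * a (tv (n + 1)) * pd (tv (n + 1)) f a))"

text \<open>For p >= 1 (this is the t-part of D_{p+1}).\<close>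
definition TpartP :: "(nat \<Rightarrow> var) \<Rightarrow> nat \<Rightarrow> nat \<Rightarrow> oper" where
  "TpartP tv kk p = (\<lambda>f a.
     1 / real kk * (\<Sum>n. a (X n) * pd (tv ((p + n) * kk)) f a
                       + real n * a (tv n) * pd (tv (p * kk + n)) f a)
     + 1 / (2 * real kk) * (\<Sum>n = 1..<p * kk. pd (tv n) (pd (tv (p * kk - n)) f) a))"

fun Dop :: "nat \<Rightarrow> nat \<Rightarrow> nat \<Rightarrow> oper" where
  "Dop k m 0 = (\<lambda>f a.
      Tpart0 T k f a + Tpart0 TB m f a
      + (\<Sum>n. real (n + 1) * a (X (n + 1)) * pd (X n) f a)
      + (1 / real k + 1 / real m) * a (X 0) * a (X 1) * f a
      + a (X 0) * (a (T k) + a (TB m)) * f a)"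
| "Dop k m (Suc 0) = (\<lambda>f a.
      Tpart1 T k f a + Tpart1 TB m f a
      + (\<Sum>n. real (n + 1) * a (X (n + 1)) * pd (X (n + 1)) f a)
      + (1 / real k + 1 / real m) * (a (X 0))\<^sup>2 / 2 * f a)"
| "Dop k m (Suc (Suc p)) = (\<lambda>f a.
      (\<Sum>n. real (n + 1) * a (X (n + 1)) * pd (X (Suc p + n + 1)) f a)
      + TpartP T k (Suc p) f a + TpartP TB m (Suc p) f a)"

end

theory Submission
  imports Defs
begin


lemma clairaut:
  fixes g gx gy gxy gyx :: "real \<Rightarrow> real \<Rightarrow> real"
  assumes dx: "\<And>x y. ((\<lambda>x. g x y) has_real_derivative gx x y) (at x)"
  and dy: "\<And>x y. ((\<lambda>y. g x y) has_real_derivative gy x y) (at y)"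
  and dxy: "\<And>x y. ((\<lambda>y. gx x y) has_real_derivative gxy x y) (at y)"
  and dyx: "\<And>x y. ((\<lambda>x. gy x y) has_real_derivative gyx x y) (at x)"
  and c1: "continuous_on UNIV (\<lambda>z. gxy (fst z) (snd z))"
  and c2: "continuous_on UNIV (\<lambda>z. gyx (fst z) (snd z))"
  shows "gxy x0 y0 = gyx x0 y0"
proof -
  have key: "\<exists>\<xi> \<eta> \<xi>' \<eta>'. \<bar>\<xi>-x0\<bar> < h \<and> \<bar>\<eta>-y0\<bar> < h \<and> \<bar>\<xi>'-x0\<bar> < h \<and> \<bar>\<eta>'-y0\<bar> < h
      \<and> gxy \<xi> \<eta> = gyx \<xi>' \<eta>'" if hp: "h > 0" for h
  proof -
    have "\<exists>z. x0 < z \<and> z < x0 + h \<and> ((\<lambda>s. g s (y0+h) - g s y0) (x0+h) - (\<lambda>s. g s (y0+h) - g s y0) x0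
           = (x0 + h - x0) * (gx z (y0+h) - gx z y0))"
      using hp by (intro MVT2) (auto intro!: derivative_eq_intros dx)
    then obtain \<xi> where \<xi>: "x0 < \<xi>" "\<xi> < x0 + h"
      "g (x0+h) (y0+h) - g (x0+h) y0 - (g x0 (y0+h) - g x0 y0) = h * (gx \<xi> (y0+h) - gx \<xi> y0)" by auto
    have "\<exists>z. y0 < z \<and> z < y0 + h \<and> gx \<xi> (y0+h) - gx \<xi> y0 = (y0 + h - y0) * gxy \<xi> z"
      using hp by (intro MVT2) (auto intro!: dxy)
    then obtain \<eta> where \<eta>: "y0 < \<eta>" "\<eta> < y0 + h" "gx \<xi> (y0+h) - gx \<xi> y0 = h * gxy \<xi> \<eta>" by auto
    have "\<exists>z. y0 < z \<and> z < y0 + h \<and> ((\<lambda>t. g (x0+h) t - g x0 t) (y0+h) - (\<lambda>t. g (x0+h) t - g x0 t) y0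
           = (y0 + h - y0) * (gy (x0+h) z - gy x0 z))"
      using hp by (intro MVT2) (auto intro!: derivative_eq_intros dy)
    then obtain \<eta>' where \<eta>': "y0 < \<eta>'" "\<eta>' < y0 + h"
      "g (x0+h) (y0+h) - g x0 (y0+h) - (g (x0+h) y0 - g x0 y0) = h * (gy (x0+h) \<eta>' - gy x0 \<eta>')" by auto
    have "\<exists>z. x0 < z \<and> z < x0 + h \<and> gy (x0+h) \<eta>' - gy x0 \<eta>' = (x0 + h - x0) * gyx z \<eta>'"
      using hp by (intro MVT2) (auto intro!: dyx)
    then obtain \<xi>' where \<xi>': "x0 < \<xi>'" "\<xi>' < x0 + h" "gy (x0+h) \<eta>' - gy x0 \<eta>' = h * gyx \<xi>' \<eta>'" by auto
    have "h * (h * gxy \<xi> \<eta>) = h * (h * gyx \<xi>' \<eta>')"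
      using \<xi>(3) \<eta>(3) \<eta>'(3) \<xi>'(3) by (simp add: algebra_simps)
    then have "gxy \<xi> \<eta> = gyx \<xi>' \<eta>'" using hp by simp
    then show ?thesis using \<xi> \<eta> \<xi>' \<eta>' by (intro exI[of _ \<xi>] exI[of _ \<eta>] exI[of _ \<xi>'] exI[of _ \<eta>']) auto
  qed
  show ?thesis
  proof (rule ccontr)
    assume ne: "gxy x0 y0 \<noteq> gyx x0 y0"
    define e where "e = \<bar>gxy x0 y0 - gyx x0 y0\<bar> / 2"
    have e: "e > 0" using ne by (simp add: e_def)
    obtain d1 where d1: "d1 > 0" "\<And>z. dist z (x0,y0) < d1 \<Longrightarrow> dist (gxy (fst z) (snd z)) (gxy x0 y0) < e"
      using c1 e unfolding continuous_on_iff by (metis UNIV_I fst_conv snd_conv)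
    obtain d2 where d2: "d2 > 0" "\<And>z. dist z (x0,y0) < d2 \<Longrightarrow> dist (gyx (fst z) (snd z)) (gyx x0 y0) < e"
      using c2 e unfolding continuous_on_iff by (metis UNIV_I fst_conv snd_conv)
    define h where "h = min d1 d2 / 2"
    have hp: "h > 0" using d1 d2 by (simp add: h_def)
    obtain \<xi> \<eta> \<xi>' \<eta>' where pts: "\<bar>\<xi>-x0\<bar> < h" "\<bar>\<eta>-y0\<bar> < h" "\<bar>\<xi>'-x0\<bar> < h" "\<bar>\<eta>'-y0\<bar> < h"
      "gxy \<xi> \<eta> = gyx \<xi>' \<eta>'" using key[OF hp] by blast
    have dd: "dist (a,b) (x0,y0) < min d1 d2" if "\<bar>a-x0\<bar> < h" "\<bar>b-y0\<bar> < h" for a b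
    proof -
      have "dist (a,b) (x0,y0) = sqrt ((a-x0)\<^sup>2 + (b-y0)\<^sup>2)" by (simp add: dist_Pair_Pair dist_real_def)
      also have "\<dots> \<le> \<bar>a-x0\<bar> + \<bar>b-y0\<bar>" by (rule sqrt_sum_squares_le_sum_abs)
      also have "\<dots> < min d1 d2" using that by (simp add: h_def)
      finally show ?thesis .
    qed
    have "dist (gxy \<xi> \<eta>) (gxy x0 y0) < e" using d1(2)[of "(\<xi>,\<eta>)"] dd[OF pts(1,2)] by simp
    moreover have "dist (gyx \<xi>' \<eta>') (gyx x0 y0) < e" using d2(2)[of "(\<xi>',\<eta>')"] dd[OF pts(3,4)] by simp
    ultimately show False using pts(5) unfolding dist_real_def e_def by (smt (verit) field_sum_of_halves)
  qed
qed


definition D1 :: "fn \<Rightarrow> bool" where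
  "D1 g \<longleftrightarrow> (\<forall>v a. (\<lambda>h. g (a(v:=h))) differentiable (at (a v)))"

lemma pd_has: "D1 g \<Longrightarrow> ((\<lambda>h. g (a(v:=h))) has_real_derivative pd v g a) (at (a v))"
  unfolding D1_def pd_def using DERIV_deriv_iff_real_differentiable by blast

lemma pd_has_at: "D1 g \<Longrightarrow> ((\<lambda>h. g (a(v:=h))) has_real_derivative pd v g (a(v:=x))) (at x)"
  using pd_has[of g "a(v:=x)" v] by simp

lemma pd_eqI: "(\<And>a. ((\<lambda>h. g (a(v:=h))) has_real_derivative D a) (at (a v))) \<Longrightarrow> pd v g = D"
  unfolding pd_def by (rule ext) (rule DERIV_imp_deriv)

lemma D1I: "(\<And>v a. ((\<lambda>h. g (a(v:=h))) has_real_derivative D v a) (at (a v))) \<Longrightarrow> D1 g"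
  unfolding D1_def using real_differentiable_def by blast

lemma pd_add: "D1 g \<Longrightarrow> D1 h \<Longrightarrow> pd v (\<lambda>a. g a + h a) = (\<lambda>a. pd v g a + pd v h a)"
  by (rule pd_eqI) (auto intro!: derivative_eq_intros pd_has)
lemma pd_diff: "D1 g \<Longrightarrow> D1 h \<Longrightarrow> pd v (\<lambda>a. g a - h a) = (\<lambda>a. pd v g a - pd v h a)"
  by (rule pd_eqI) (auto intro!: derivative_eq_intros pd_has)
lemma pd_mult: "D1 g \<Longrightarrow> D1 h \<Longrightarrow> pd v (\<lambda>a. g a * h a) = (\<lambda>a. pd v g a * h a + g a * pd v h a)"
  by (rule pd_eqI) (auto intro!: derivative_eq_intros pd_has)
lemma pd_const: "pd v (\<lambda>a. c) = (\<lambda>a. 0)"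
  by (rule pd_eqI) (auto intro!: derivative_eq_intros)
lemma pd_coord: "pd v (\<lambda>a. a w) = (\<lambda>a. of_bool (w = v))"
  by (rule pd_eqI) (auto intro!: derivative_eq_intros)
lemma pd_cdiv: "D1 g \<Longrightarrow> pd v (\<lambda>a. g a / c) = (\<lambda>a. pd v g a / c)"
  by (rule pd_eqI) (rule DERIV_cdivide, erule pd_has)
lemma pd_sq: "D1 g \<Longrightarrow> pd v (\<lambda>a. (g a)\<^sup>2) = (\<lambda>a. 2 * g a * pd v g a)"
  by (rule pd_eqI) (auto intro!: derivative_eq_intros pd_has)
lemma pd_sum: "finite A \<Longrightarrow> (\<And>i. i \<in> A \<Longrightarrow> D1 (g i)) \<Longrightarrow>
   pd v (\<lambda>a. \<Sum>i\<in>A. g i a) = (\<lambda>a. \<Sum>i\<in>A. pd v (g i) a)"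
  by (rule pd_eqI) (auto intro!: derivative_eq_intros pd_has)

lemma D1_add: "D1 g \<Longrightarrow> D1 h \<Longrightarrow> D1 (\<lambda>a. g a + h a)"
  by (rule D1I) (auto intro!: derivative_eq_intros pd_has)
lemma D1_diff: "D1 g \<Longrightarrow> D1 h \<Longrightarrow> D1 (\<lambda>a. g a - h a)"
  by (rule D1I) (auto intro!: derivative_eq_intros pd_has)
lemma D1_mult: "D1 g \<Longrightarrow> D1 h \<Longrightarrow> D1 (\<lambda>a. g a * h a)"
  by (rule D1I) (auto intro!: derivative_eq_intros pd_has)
lemma D1_const: "D1 (\<lambda>a. c)"
  by (rule D1I) (auto intro!: derivative_eq_intros)
lemma D1_coord: "D1 (\<lambda>a. a w)"
  by (rule D1I[of _ "\<lambda>v a. if w = v then 1 else 0"]) (auto intro!: derivative_eq_intros)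
lemma D1_cdiv: "D1 g \<Longrightarrow> D1 (\<lambda>a. g a / c)"
  by (rule D1I) (rule DERIV_cdivide, erule pd_has)
lemma D1_sq: "D1 g \<Longrightarrow> D1 (\<lambda>a. (g a)\<^sup>2)"
  by (rule D1I) (auto intro!: derivative_eq_intros pd_has)
lemma D1_sum: "finite A \<Longrightarrow> (\<And>i. i \<in> A \<Longrightarrow> D1 (g i)) \<Longrightarrow> D1 (\<lambda>a. \<Sum>i\<in>A. g i a)"
  by (rule D1I) (auto intro!: derivative_eq_intros pd_has)

lemma pds_snoc: "pds (vs @ [v]) f = pds vs (pd v f)"
  by (induction vs) auto

lemma depends_pd: "depends_only V f \<Longrightarrow> depends_only V (pd v f)"
  unfolding depends_only_def pd_def
proof (intro allI impI)
  fix a b :: pt assume H: "\<forall>a b. (\<forall>v\<in>V. a v = b v) \<longrightarrow> f a = f b" and ab: "\<forall>v\<in>V. a v = b v"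
  show "deriv (\<lambda>h. f (a(v := h))) (a v) = deriv (\<lambda>h. f (b(v := h))) (b v)"
  proof (cases "v \<in> V")
    case True
    have "(\<lambda>h. f (a(v := h))) = (\<lambda>h. f (b(v := h)))" by (intro ext H[rule_format]) (simp add: ab)
    then show ?thesis using True ab by simp
  next
    case False
    have "(\<lambda>h. f (a(v := h))) = (\<lambda>h. f a)" using False by (intro ext H[rule_format]) auto
    moreover have "(\<lambda>h. f (b(v := h))) = (\<lambda>h. f b)" using False by (intro ext H[rule_format]) auto
    ultimately show ?thesis by simp
  qed
qed

lemma pd_zero: "depends_only V f \<Longrightarrow> v \<notin> V \<Longrightarrow> pd v f = (\<lambda>a. 0)"
proof (rule pd_eqI)
  fix a assume H: "depends_only V f" "v \<notin> V"
  have "f (a(v := h)) = f a" for h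
  proof -
    have "\<forall>w\<in>V. (a(v:=h)) w = a w" using H(2) by auto
    then show ?thesis using H(1) unfolding depends_only_def by blast
  qed
  then have "(\<lambda>h. f (a(v := h))) = (\<lambda>h. f a)" by (intro ext)
  then show "((\<lambda>h. f (a(v := h))) has_real_derivative 0) (at (a v))" by simp
qed

lemma depends_mult: "depends_only V f \<Longrightarrow> depends_only (insert w V) (\<lambda>a. a w * f a)"
  unfolding depends_only_def by simp

lemma depends_mono: "depends_only V f \<Longrightarrow> V \<subseteq> W \<Longrightarrow> depends_only W f"
  unfolding depends_only_def by blast

lemma Dom_all: "f \<in> Dom \<Longrightarrow> continuous_on UNIV (pds vs f) \<and> (\<forall>v a. (\<lambda>h. pds vs f (a(v := h))) differentiable (at (a v)))"
  unfolding Dom_def by blast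

lemma Dom_D1: "f \<in> Dom \<Longrightarrow> D1 f"
  using Dom_all[of f "[]"] unfolding D1_def by simp

lemma Dom_pd: assumes "f \<in> Dom" shows "pd v f \<in> Dom"
proof -
  obtain V where V: "finite V" "V \<subseteq> Collect valid_var" "depends_only V f" using assms unfolding Dom_def by blast
  show ?thesis unfolding Dom_def
    using V depends_pd[OF V(3)] Dom_all[OF assms] by (auto simp: pds_snoc[symmetric])
qed

lemma Dom_cont2: "f \<in> Dom \<Longrightarrow> continuous_on UNIV (pd u (pd v f))"
  using Dom_all[of f "[u,v]"] by simp

lemma pd_sym_pt: assumes f: "f \<in> Dom" and uv: "u \<noteq> v"
  shows "pd u (pd v f) a = pd v (pd u f) a"
proof -
  have D: "D1 f" "D1 (pd u f)" "D1 (pd v f)" using f by (auto intro: Dom_D1 Dom_pd)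
  have cm: "continuous_on UNIV (\<lambda>z::real\<times>real. a(u := fst z, v := snd z))"
  proof (rule continuous_on_coordinatewise_then_product)
    fix i show "continuous_on UNIV (\<lambda>z::real\<times>real. (a(u := fst z, v := snd z)) i)"
      by (cases "i = v"; cases "i = u") (auto intro!: continuous_intros)
  qed
  have c: "continuous_on UNIV (\<lambda>z::real\<times>real. pd w (pd w' f) (a(u := fst z, v := snd z)))" for w w'
    using continuous_on_compose2[OF Dom_cont2[OF f, of w w'] cm] by simp
  have "pd v (pd u f) ((a(u := a u, v := a v))) = pd u (pd v f) ((a(u := a u, v := a v)))"
  proof (rule clairaut[where g = "\<lambda>x y. f (a(u := x, v := y))" and gx = "\<lambda>x y. pd u f (a(u := x, v := y))"
       and gy = "\<lambda>x y. pd v f (a(u := x, v := y))"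
       and gxy = "\<lambda>x y. pd v (pd u f) (a(u := x, v := y))" and gyx = "\<lambda>x y. pd u (pd v f) (a(u := x, v := y))"
])
    fix x y
    show "((\<lambda>x. f (a(u := x, v := y))) has_real_derivative pd u f (a(u := x, v := y))) (at x)"
      using pd_has_at[OF D(1), of "a(v:=y)" u x] uv by (simp add: fun_upd_twist)
    show "((\<lambda>y. f (a(u := x, v := y))) has_real_derivative pd v f (a(u := x, v := y))) (at y)"
      using pd_has_at[OF D(1), of "a(u:=x)" v y] by simp
    show "((\<lambda>y. pd u f (a(u := x, v := y))) has_real_derivative pd v (pd u f) (a(u := x, v := y))) (at y)"
      using pd_has_at[OF D(2), of "a(u:=x)" v y] by simp
    show "((\<lambda>x. pd v f (a(u := x, v := y))) has_real_derivative pd u (pd v f) (a(u := x, v := y))) (at x)"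
      using pd_has_at[OF D(3), of "a(v:=y)" u x] uv by (simp add: fun_upd_twist)
  qed (use c in auto)
  then show ?thesis by simp
qed

lemma pd_sym: "f \<in> Dom \<Longrightarrow> pd u (pd v f) = pd v (pd u f)"
  by (rule ext, cases "u = v") (auto intro: pd_sym_pt)


fun idx :: "var \<Rightarrow> nat" where "idx (X j) = j" | "idx (T j) = j" | "idx (TB j) = j"

definition fsup :: "fn \<Rightarrow> nat \<Rightarrow> bool" where
  "fsup g N \<longleftrightarrow> depends_only {v. idx v < N} g"

lemma fsup_mono: "fsup g N \<Longrightarrow> N \<le> N' \<Longrightarrow> fsup g N'"
  unfolding fsup_def by (erule depends_mono) auto

lemma fsup_pd: "fsup g N \<Longrightarrow> fsup (pd v g) N"
  unfolding fsup_def by (rule depends_pd)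

lemma fsup_mult: "fsup g N \<Longrightarrow> idx w < N \<Longrightarrow> fsup (\<lambda>a. a w * g a) N"
proof -
  assume a: "fsup g N" "idx w < N"
  have "insert w {v. idx v < N} = {v. idx v < N}" using a(2) by auto
  then show ?thesis using depends_mult[of "{v. idx v < N}" g w] a(1) unfolding fsup_def by simp
qed

lemma fsup_zero: "fsup g N \<Longrightarrow> N \<le> idx v \<Longrightarrow> pd v g = (\<lambda>a. 0)"
  unfolding fsup_def by (erule pd_zero) simp

lemma Dom_fsup: assumes "f \<in> Dom" shows "\<exists>N. fsup f N"
proof -
  obtain V where V: "finite V" "depends_only V f" using assms unfolding Dom_def by blast
  have "V \<subseteq> {v. idx v < Suc (Max (idx ` V))}"
    using V(1) by (auto simp: less_Suc_eq_le intro: Max_ge)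
  then show ?thesis unfolding fsup_def using depends_mono[OF V(2)] by blast
qed

lemma Dom_fsup_ge: assumes "f \<in> Dom" shows "\<exists>N\<ge>M. fsup f N"
proof -
  obtain N where "fsup f N" using Dom_fsup[OF assms] by blast
  then have "fsup f (max N M)" by (rule fsup_mono) simp
  then show ?thesis by (intro exI[of _ "max N M"]) simp
qed

definition Tpart0F :: "(nat \<Rightarrow> var) \<Rightarrow> nat \<Rightarrow> nat \<Rightarrow> oper" where
  "Tpart0F tv kk N = (\<lambda>f a.
     1 / real kk * (\<Sum>n<N. a (X (n + 2)) * pd (tv ((n + 1) * kk)) f a
                       + real (n + 1 + kk) * a (tv (n + 1 + kk)) * pd (tv (n + 1)) f a)
     + 1 / (2 * real kk) * (\<Sum>n = 1..<kk. real n * a (tv n) * real (kk - n) * a (tv (kk - n))) * f a)"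

lemma Tpart0_fin: assumes "fsup g N" "0 < kk" "\<And>j. idx (tv j) = j"
  shows "Tpart0 tv kk g a = Tpart0F tv kk N g a"
proof -
  have "(\<Sum>n. a (X (n + 2)) * pd (tv ((n + 1) * kk)) g a
                       + real (n + 1 + kk) * a (tv (n + 1 + kk)) * pd (tv (n + 1)) g a)
      = (\<Sum>n<N. a (X (n + 2)) * pd (tv ((n + 1) * kk)) g a
                       + real (n + 1 + kk) * a (tv (n + 1 + kk)) * pd (tv (n + 1)) g a)"
  proof (rule suminf_finite)
    fix n assume "n \<notin> {..<N}"
    then have n: "N \<le> n" by simp
    have "n + 1 \<le> (n+1) * kk" using mult_le_mono2[of 1 kk "n+1"] assms(2) by simp
    then have "N \<le> (n+1) * kk" using n by linarith
    then show "a (X (n + 2)) * pd (tv ((n + 1) * kk)) g a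
                       + real (n + 1 + kk) * a (tv (n + 1 + kk)) * pd (tv (n + 1)) g a = 0"
      using fsup_zero[OF assms(1)] n assms(3) by simp
  qed simp
  then show ?thesis unfolding Tpart0_def Tpart0F_def by simp
qed

lemmas pd_rules = pd_add pd_diff pd_mult pd_const pd_coord pd_sum D1_add D1_diff D1_mult D1_const D1_coord D1_sum
  pd_cdiv pd_sq D1_cdiv D1_sq
  Dom_D1 Dom_pd


definition Tpart1F :: "(nat \<Rightarrow> var) \<Rightarrow> nat \<Rightarrow> nat \<Rightarrow> oper" where
  "Tpart1F tv kk N = (\<lambda>f a.
     1 / real kk * (\<Sum>n<N. a (X (n + 1)) * pd (tv ((n + 1) * kk)) f a
                       + real (n + 1) * a (tv (n + 1)) * pd (tv (n + 1)) f a))"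

definition TpartPF :: "(nat \<Rightarrow> var) \<Rightarrow> nat \<Rightarrow> nat \<Rightarrow> nat \<Rightarrow> oper" where
  "TpartPF tv kk p N = (\<lambda>f a.
     1 / real kk * (\<Sum>n<N. a (X n) * pd (tv ((p + n) * kk)) f a
                       + real n * a (tv n) * pd (tv (p * kk + n)) f a)
     + 1 / (2 * real kk) * (\<Sum>n = 1..<p * kk. pd (tv n) (pd (tv (p * kk - n)) f) a))"

definition X0F :: "nat \<Rightarrow> oper" where
  "X0F N = (\<lambda>f a. \<Sum>n<N. real (n + 1) * a (X (n + 1)) * pd (X n) f a)"
definition X1F :: "nat \<Rightarrow> oper" where
  "X1F N = (\<lambda>f a. \<Sum>n<N. real (n + 1) * a (X (n + 1)) * pd (X (n + 1)) f a)"
definition XPF :: "nat \<Rightarrow> nat \<Rightarrow> oper" where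
  "XPF p N = (\<lambda>f a. \<Sum>n<N. real (n + 1) * a (X (n + 1)) * pd (X (Suc p + n + 1)) f a)"

fun DopF :: "nat \<Rightarrow> nat \<Rightarrow> nat \<Rightarrow> nat \<Rightarrow> oper" where
  "DopF k m N 0 = (\<lambda>f a.
      Tpart0F T k N f a + Tpart0F TB m N f a + X0F N f a
      + (1 / real k + 1 / real m) * a (X 0) * a (X 1) * f a
      + a (X 0) * (a (T k) + a (TB m)) * f a)"
| "DopF k m N (Suc 0) = (\<lambda>f a.
      Tpart1F T k N f a + Tpart1F TB m N f a + X1F N f a
      + (1 / real k + 1 / real m) * (a (X 0))\<^sup>2 / 2 * f a)"
| "DopF k m N (Suc (Suc p)) = (\<lambda>f a.
      XPF p N f a + TpartPF T k (Suc p) N f a + TpartPF TB m (Suc p) N f a)"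

lemma Tpart1_fin: assumes "fsup g N" "0 < kk" "\<And>j. idx (tv j) = j"
  shows "Tpart1 tv kk g a = Tpart1F tv kk N g a"
proof -
  have "(\<Sum>n. a (X (n + 1)) * pd (tv ((n + 1) * kk)) g a
                       + real (n + 1) * a (tv (n + 1)) * pd (tv (n + 1)) g a)
      = (\<Sum>n<N. a (X (n + 1)) * pd (tv ((n + 1) * kk)) g a
                       + real (n + 1) * a (tv (n + 1)) * pd (tv (n + 1)) g a)"
  proof (rule suminf_finite)
    fix n assume "n \<notin> {..<N}"
    then have n: "N \<le> n" by simp
    have "n + 1 \<le> (n+1) * kk" using mult_le_mono2[of 1 kk "n+1"] assms(2) by simp
    then have "N \<le> (n+1) * kk" using n by linarith
    then show "a (X (n + 1)) * pd (tv ((n + 1) * kk)) g a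
                       + real (n + 1) * a (tv (n + 1)) * pd (tv (n + 1)) g a = 0"
      using fsup_zero[OF assms(1)] n assms(3) by simp
  qed simp
  then show ?thesis unfolding Tpart1_def Tpart1F_def by simp
qed

lemma TpartP_fin: assumes "fsup g N" "0 < kk" "\<And>j. idx (tv j) = j"
  shows "TpartP tv kk p g a = TpartPF tv kk p N g a"
proof -
  have "(\<Sum>n. a (X n) * pd (tv ((p + n) * kk)) g a
                       + real n * a (tv n) * pd (tv (p * kk + n)) g a)
      = (\<Sum>n<N. a (X n) * pd (tv ((p + n) * kk)) g a
                       + real n * a (tv n) * pd (tv (p * kk + n)) g a)"
  proof (rule suminf_finite)
    fix n assume "n \<notin> {..<N}"
    then have n: "N \<le> n" by simp
    have "p + n \<le> (p+n) * kk" using mult_le_mono2[of 1 kk "p+n"] assms(2) by simp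
    then have "N \<le> (p+n) * kk" using n by linarith
    then show "a (X n) * pd (tv ((p + n) * kk)) g a
                       + real n * a (tv n) * pd (tv (p * kk + n)) g a = 0"
      using fsup_zero[OF assms(1)] n assms(3) by simp
  qed simp
  then show ?thesis unfolding TpartP_def TpartPF_def by simp
qed

lemma Xsum_fin: assumes "fsup g N" "\<And>n. N \<le> n \<Longrightarrow> N \<le> j n"
  shows "(\<Sum>n. real (n + 1) * a (X (n + 1)) * pd (X (j n)) g a) = (\<Sum>n<N. real (n + 1) * a (X (n + 1)) * pd (X (j n)) g a)"
proof (rule suminf_finite)
  fix n assume "n \<notin> {..<N}"
  then show "real (n + 1) * a (X (n + 1)) * pd (X (j n)) g a = 0"
    using fsup_zero[OF assms(1), of "X (j n)"] assms(2)[of n] by simp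
qed simp

lemma Dop_fin: assumes "fsup g N" "0 < k" "0 < m"
  shows "Dop k m p g = DopF k m N p g"
proof (rule ext)
  fix a
  have it: "\<And>j. idx (T j) = j" "\<And>j. idx (TB j) = j" by simp_all
  show "Dop k m p g a = DopF k m N p g a"
  proof (cases p)
    case 0
    then show ?thesis using Xsum_fin[OF assms(1), of id a] Tpart0_fin[OF assms(1) assms(2) it(1)] Tpart0_fin[OF assms(1) assms(3) it(2)]
      by (simp add: X0F_def)
  next
    case (Suc p')
    show ?thesis
    proof (cases p')
      case 0
      then show ?thesis using Suc Xsum_fin[OF assms(1), of Suc a] Tpart1_fin[OF assms(1) assms(2) it(1)] Tpart1_fin[OF assms(1) assms(3) it(2)]
        by (simp add: X1F_def)
    next
      case (Suc q)
      then show ?thesis using \<open>p = Suc p'\<close> Xsum_fin[OF assms(1), of "\<lambda>n. Suc q + n + 1" a] TpartP_fin[OF assms(1) assms(2) it(1)] TpartP_fin[OF assms(1) assms(3) it(2)]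
        by (simp add: XPF_def)
    qed
  qed
qed


definition EpdT0 :: "(nat \<Rightarrow> var) \<Rightarrow> nat \<Rightarrow> nat \<Rightarrow> var \<Rightarrow> fn \<Rightarrow> pt \<Rightarrow> real" where
  "EpdT0 tv kk N v f a =
     1 / real kk * (\<Sum>n<N. of_bool (X (n + 2) = v) * pd (tv ((n + 1) * kk)) f a
                       + real (n + 1 + kk) * of_bool (tv (n + 1 + kk) = v) * pd (tv (n + 1)) f a)
     + 1 / (2 * real kk) * (\<Sum>n = 1..<kk. real n * of_bool (tv n = v) * real (kk - n) * a (tv (kk - n))
        + real n * a (tv n) * real (kk - n) * of_bool (tv (kk - n) = v)) * f a"
definition EmulT0 :: "(nat \<Rightarrow> var) \<Rightarrow> nat \<Rightarrow> nat \<Rightarrow> var \<Rightarrow> fn \<Rightarrow> pt \<Rightarrow> real" where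
  "EmulT0 tv kk N w f a =
     1 / real kk * (\<Sum>n<N. a (X (n + 2)) * of_bool (w = tv ((n + 1) * kk)) * f a
                       + real (n + 1 + kk) * a (tv (n + 1 + kk)) * of_bool (w = tv (n + 1)) * f a)"
definition EpdT1 :: "(nat \<Rightarrow> var) \<Rightarrow> nat \<Rightarrow> nat \<Rightarrow> var \<Rightarrow> fn \<Rightarrow> pt \<Rightarrow> real" where
  "EpdT1 tv kk N v f a =
     1 / real kk * (\<Sum>n<N. of_bool (X (n + 1) = v) * pd (tv ((n + 1) * kk)) f a
                       + real (n + 1) * of_bool (tv (n + 1) = v) * pd (tv (n + 1)) f a)"
definition EmulT1 :: "(nat \<Rightarrow> var) \<Rightarrow> nat \<Rightarrow> nat \<Rightarrow> var \<Rightarrow> fn \<Rightarrow> pt \<Rightarrow> real" where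
  "EmulT1 tv kk N w f a =
     1 / real kk * (\<Sum>n<N. a (X (n + 1)) * of_bool (w = tv ((n + 1) * kk)) * f a
                       + real (n + 1) * a (tv (n + 1)) * of_bool (w = tv (n + 1)) * f a)"
definition EpdTP :: "(nat \<Rightarrow> var) \<Rightarrow> nat \<Rightarrow> nat \<Rightarrow> nat \<Rightarrow> var \<Rightarrow> fn \<Rightarrow> pt \<Rightarrow> real" where
  "EpdTP tv kk p N v f a =
     1 / real kk * (\<Sum>n<N. of_bool (X n = v) * pd (tv ((p + n) * kk)) f a
                       + real n * of_bool (tv n = v) * pd (tv (p * kk + n)) f a)"
definition EmulTP :: "(nat \<Rightarrow> var) \<Rightarrow> nat \<Rightarrow> nat \<Rightarrow> nat \<Rightarrow> var \<Rightarrow> fn \<Rightarrow> pt \<Rightarrow> real" where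
  "EmulTP tv kk p N w f a =
     1 / real kk * (\<Sum>n<N. a (X n) * of_bool (w = tv ((p + n) * kk)) * f a
                       + real n * a (tv n) * of_bool (w = tv (p * kk + n)) * f a)
     + 1 / (2 * real kk) * (\<Sum>n = 1..<p * kk. of_bool (w = tv (p * kk - n)) * pd (tv n) f a
                                           + of_bool (w = tv n) * pd (tv (p * kk - n)) f a)"

lemma S_gen: assumes "f \<in> Dom" shows "pd u (pd v f) = pd v (pd u f)"
  using pd_sym assms by blast

lemma pdT0: assumes f: "f \<in> Dom"
  shows "pd v (Tpart0F tv kk N f) a = Tpart0F tv kk N (pd v f) a + EpdT0 tv kk N v f a"
proof -
  have S: "\<And>u. pd u (pd v f) = pd v (pd u f)" using pd_sym f by blast
  show ?thesis
  unfolding Tpart0F_def EpdT0_def using f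
  apply (simp only: pd_rules finite_lessThan finite_atLeastLessThan f S)
  apply (simp add: sum.distrib algebra_simps)
  done
qed

lemma mulT0: assumes f: "f \<in> Dom"
  shows "Tpart0F tv kk N (\<lambda>a. a w * f a) a = a w * Tpart0F tv kk N f a + EmulT0 tv kk N w f a"
  unfolding Tpart0F_def EmulT0_def using f
  apply (simp only: pd_rules finite_lessThan finite_atLeastLessThan f)
  apply (cases "kk = 0"; simp add: sum.distrib algebra_simps sum_distrib_left)
  done

lemma pdT1: assumes f: "f \<in> Dom"
  shows "pd v (Tpart1F tv kk N f) a = Tpart1F tv kk N (pd v f) a + EpdT1 tv kk N v f a"
proof -
  have S: "\<And>u. pd u (pd v f) = pd v (pd u f)" using pd_sym f by blast
  show ?thesis
  unfolding Tpart1F_def EpdT1_def using f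
  apply (simp only: pd_rules finite_lessThan finite_atLeastLessThan f S)
  apply (simp add: sum.distrib algebra_simps)
  done
qed

lemma mulT1: assumes f: "f \<in> Dom"
  shows "Tpart1F tv kk N (\<lambda>a. a w * f a) a = a w * Tpart1F tv kk N f a + EmulT1 tv kk N w f a"
  unfolding Tpart1F_def EmulT1_def using f
  apply (simp only: pd_rules finite_lessThan finite_atLeastLessThan f)
  apply (simp add: sum.distrib algebra_simps sum_distrib_left)
  done

lemma pdTP: assumes f: "f \<in> Dom"
  shows "pd v (TpartPF tv kk p N f) a = TpartPF tv kk p N (pd v f) a + EpdTP tv kk p N v f a"
proof -
  have S: "\<And>u g. g \<in> Dom \<Longrightarrow> pd u (pd v g) = pd v (pd u g)" using pd_sym by blast
  show ?thesis
  unfolding TpartPF_def EpdTP_def using f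
  apply (simp only: pd_rules finite_lessThan finite_atLeastLessThan f S)
  apply (simp add: sum.distrib algebra_simps)
  done
qed

lemma mulTP: assumes f: "f \<in> Dom"
  shows "TpartPF tv kk p N (\<lambda>a. a w * f a) a = a w * TpartPF tv kk p N f a + EmulTP tv kk p N w f a"
  unfolding TpartPF_def EmulTP_def using f
  apply (simp only: pd_rules finite_lessThan finite_atLeastLessThan f)
  apply (simp add: sum.distrib algebra_simps sum_distrib_left)
  done


lemma D1_T0: "f \<in> Dom \<Longrightarrow> D1 (Tpart0F tv kk N f)"
  unfolding Tpart0F_def by (simp only: pd_rules finite_lessThan finite_atLeastLessThan)
lemma D1_T1: "f \<in> Dom \<Longrightarrow> D1 (Tpart1F tv kk N f)"
  unfolding Tpart1F_def by (simp only: pd_rules finite_lessThan finite_atLeastLessThan)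
lemma D1_TP: "f \<in> Dom \<Longrightarrow> D1 (TpartPF tv kk p N f)"
  unfolding TpartPF_def by (simp only: pd_rules finite_lessThan finite_atLeastLessThan)

lemma pdD0: assumes f: "f \<in> Dom"
  shows "pd v (DopF k m N 0 f) a = DopF k m N 0 (pd v f) a + EpdT0 T k N v f a + EpdT0 TB m N v f a
     + (\<Sum>n<N. real (n + 1) * of_bool (X (n + 1) = v) * pd (X n) f a)
     + (1 / real k + 1 / real m) * (of_bool (X 0 = v) * a (X 1) + a (X 0) * of_bool (X 1 = v)) * f a
     + (of_bool (X 0 = v) * (a (T k) + a (TB m)) + a (X 0) * (of_bool (T k = v) + of_bool (TB m = v))) * f a"
proof -
  have S: "\<And>u. pd u (pd v f) = pd v (pd u f)" using pd_sym f by blast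
  show ?thesis
  unfolding DopF.simps X0F_def using f
  apply (simp only: pd_rules finite_lessThan finite_atLeastLessThan f S D1_T0 pdT0)
  apply (simp add: sum.distrib algebra_simps)
  done
qed

lemma mulD0: assumes f: "f \<in> Dom"
  shows "DopF k m N 0 (\<lambda>a. a w * f a) a = a w * DopF k m N 0 f a + EmulT0 T k N w f a + EmulT0 TB m N w f a
     + (\<Sum>n<N. real (n + 1) * a (X (n + 1)) * of_bool (w = X n) * f a)"
  unfolding DopF.simps X0F_def using f
  apply (simp only: pd_rules finite_lessThan finite_atLeastLessThan f mulT0)
  apply (simp add: sum.distrib algebra_simps sum_distrib_left)
  done

lemma pdD1: assumes f: "f \<in> Dom"
  shows "pd v (DopF k m N (Suc 0) f) a = DopF k m N (Suc 0) (pd v f) a + EpdT1 T k N v f a + EpdT1 TB m N v f a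
     + (\<Sum>n<N. real (n + 1) * of_bool (X (n + 1) = v) * pd (X (n + 1)) f a)
     + (1 / real k + 1 / real m) * of_bool (X 0 = v) * a (X 0) * f a"
proof -
  have S: "\<And>u. pd u (pd v f) = pd v (pd u f)" using pd_sym f by blast
  show ?thesis
  unfolding DopF.simps X1F_def using f
  apply (simp only: pd_rules finite_lessThan finite_atLeastLessThan f S D1_T1 pdT1)
  apply (simp add: sum.distrib algebra_simps)
  done
qed

lemma mulD1: assumes f: "f \<in> Dom"
  shows "DopF k m N (Suc 0) (\<lambda>a. a w * f a) a = a w * DopF k m N (Suc 0) f a + EmulT1 T k N w f a + EmulT1 TB m N w f a
     + (\<Sum>n<N. real (n + 1) * a (X (n + 1)) * of_bool (w = X (n + 1)) * f a)"
  unfolding DopF.simps X1F_def using f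
  apply (simp only: pd_rules finite_lessThan finite_atLeastLessThan f mulT1)
  apply (simp add: sum.distrib algebra_simps sum_distrib_left)
  done

lemma pdDP: assumes f: "f \<in> Dom"
  shows "pd v (DopF k m N (Suc (Suc q)) f) a = DopF k m N (Suc (Suc q)) (pd v f) a
     + EpdTP T k (Suc q) N v f a + EpdTP TB m (Suc q) N v f a
     + (\<Sum>n<N. real (n + 1) * of_bool (X (n + 1) = v) * pd (X (Suc q + n + 1)) f a)"
proof -
  have S: "\<And>u. pd u (pd v f) = pd v (pd u f)" using pd_sym f by blast
  show ?thesis
  unfolding DopF.simps XPF_def using f
  apply (simp only: pd_rules finite_lessThan finite_atLeastLessThan f S D1_TP pdTP)
  apply (simp add: sum.distrib algebra_simps)
  done
qed

lemma mulDP: assumes f: "f \<in> Dom"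
  shows "DopF k m N (Suc (Suc q)) (\<lambda>a. a w * f a) a = a w * DopF k m N (Suc (Suc q)) f a
     + EmulTP T k (Suc q) N w f a + EmulTP TB m (Suc q) N w f a
     + (\<Sum>n<N. real (n + 1) * a (X (n + 1)) * of_bool (w = X (Suc q + n + 1)) * f a)"
  unfolding DopF.simps XPF_def using f
  apply (simp only: pd_rules finite_lessThan finite_atLeastLessThan f mulTP)
  apply (simp add: sum.distrib algebra_simps sum_distrib_left)
  done


lemma sum_single: assumes "finite A" "\<And>n. n \<in> A \<Longrightarrow> n \<noteq> n0 \<Longrightarrow> G n = 0"
  shows "sum G A = (if n0 \<in> A then G n0 else 0)"
proof -
  have "sum G A = sum (\<lambda>n. if n = n0 then G n else 0) A" by (rule sum.cong) (auto simp: assms)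
  then show ?thesis using assms(1) by simp
qed

locale tvar =
  fixes tv :: "nat \<Rightarrow> var"
  assumes inj: "\<And>i j. tv i = tv j \<longleftrightarrow> i = j"
  and tx: "\<And>i j. tv i \<noteq> X j"
begin

lemma tx': "X j \<noteq> tv i" using tx by metis

lemma E1: "EpdT0 tv kk N (tv n0) f a =
   (if kk < n0 \<and> n0 < N + kk + 1 then real n0 / real kk * pd (tv (n0 - kk)) f a else 0)
 + (if 0 < n0 \<and> n0 < kk then real n0 * real (kk - n0) / real kk * a (tv (kk - n0)) * f a else 0)"
proof -
  have s1: "(\<Sum>n<N. of_bool (X (n + 2) = tv n0) * pd (tv ((n + 1) * kk)) f a
            + real (n + 1 + kk) * of_bool (tv (n + 1 + kk) = tv n0) * pd (tv (n + 1)) f a)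
        = (if kk < n0 \<and> n0 < N + kk + 1 then real n0 * pd (tv (n0 - kk)) f a else 0)"
  proof (cases "kk < n0")
    case True
    have "(\<Sum>n<N. of_bool (X (n + 2) = tv n0) * pd (tv ((n + 1) * kk)) f a
            + real (n + 1 + kk) * of_bool (tv (n + 1 + kk) = tv n0) * pd (tv (n + 1)) f a)
      = (if n0 - kk - 1 \<in> {..<N} then of_bool (X (n0 - kk - 1 + 2) = tv n0) * pd (tv ((n0 - kk - 1 + 1) * kk)) f a
            + real (n0 - kk - 1 + 1 + kk) * of_bool (tv (n0 - kk - 1 + 1 + kk) = tv n0) * pd (tv (n0 - kk - 1 + 1)) f a else 0)"
      by (rule sum_single) (auto simp: inj tx')
    also have "\<dots> = (if kk < n0 \<and> n0 < N + kk + 1 then real n0 * pd (tv (n0 - kk)) f a else 0)"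
      using True by (auto simp: inj tx' Suc_diff_Suc)
    finally show ?thesis .
  next
    case False
    then show ?thesis by (auto simp: inj tx' intro!: sum.neutral)
  qed
  have s2: "(\<Sum>n = 1..<kk. real n * of_bool (tv n = tv n0) * real (kk - n) * a (tv (kk - n))
        + real n * a (tv n) * real (kk - n) * of_bool (tv (kk - n) = tv n0))
      = (if 0 < n0 \<and> n0 < kk then 2 * (real n0 * real (kk - n0) * a (tv (kk - n0))) else 0)"
  proof -
    have a1: "(\<Sum>n = 1..<kk. real n * of_bool (tv n = tv n0) * real (kk - n) * a (tv (kk - n)))
       = (if n0 \<in> {1..<kk} then real n0 * of_bool (tv n0 = tv n0) * real (kk - n0) * a (tv (kk - n0)) else 0)"
      by (rule sum_single) (auto simp: inj)
    have a2: "(\<Sum>n = 1..<kk. real n * a (tv n) * real (kk - n) * of_bool (tv (kk - n) = tv n0))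
       = (if kk - n0 \<in> {1..<kk} then real (kk - n0) * a (tv (kk - n0)) * real (kk - (kk - n0)) * of_bool (tv (kk - (kk - n0)) = tv n0) else 0)"
      by (rule sum_single) (auto simp: inj)
    show ?thesis unfolding sum.distrib a1 a2 by auto
  qed
  show ?thesis unfolding EpdT0_def s1 s2 by auto
qed


lemma E2: "EpdT1 tv kk N (tv n0) f a = (if 0 < n0 \<and> n0 \<le> N then real n0 / real kk * pd (tv n0) f a else 0)"
proof -
  have "(\<Sum>n<N. of_bool (X (n + 1) = tv n0) * pd (tv ((n + 1) * kk)) f a
                       + real (n + 1) * of_bool (tv (n + 1) = tv n0) * pd (tv (n + 1)) f a)
    = (if n0 - 1 \<in> {..<N} then of_bool (X (n0 - 1 + 1) = tv n0) * pd (tv ((n0 - 1 + 1) * kk)) f a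
                       + real (n0 - 1 + 1) * of_bool (tv (n0 - 1 + 1) = tv n0) * pd (tv (n0 - 1 + 1)) f a else 0)"
    by (rule sum_single) (auto simp: inj tx')
  then show ?thesis unfolding EpdT1_def by (cases "n0 = 0") (auto simp: inj tx')
qed

lemma E3: "EpdTP tv kk P N (tv n0) f a = (if n0 < N then real n0 / real kk * pd (tv (P * kk + n0)) f a else 0)"
proof -
  have "(\<Sum>n<N. of_bool (X n = tv n0) * pd (tv ((P + n) * kk)) f a
                       + real n * of_bool (tv n = tv n0) * pd (tv (P * kk + n)) f a)
    = (if n0 \<in> {..<N} then of_bool (X n0 = tv n0) * pd (tv ((P + n0) * kk)) f a
                       + real n0 * of_bool (tv n0 = tv n0) * pd (tv (P * kk + n0)) f a else 0)"
    by (rule sum_single) (auto simp: inj tx')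
  then show ?thesis unfolding EpdTP_def by (auto simp: inj tx')
qed

lemma E7: "EpdT0 tv kk N (X q) f a = (if 2 \<le> q \<and> q < N + 2 then 1 / real kk * pd (tv ((q - 1) * kk)) f a else 0)"
proof -
  have "(\<Sum>n<N. of_bool (X (n + 2) = X q) * pd (tv ((n + 1) * kk)) f a
            + real (n + 1 + kk) * of_bool (tv (n + 1 + kk) = X q) * pd (tv (n + 1)) f a)
    = (if q - 2 \<in> {..<N} then of_bool (X (q - 2 + 2) = X q) * pd (tv ((q - 2 + 1) * kk)) f a
            + real (q - 2 + 1 + kk) * of_bool (tv (q - 2 + 1 + kk) = X q) * pd (tv (q - 2 + 1)) f a else 0)"
    by (rule sum_single) (auto simp: tx)
  moreover have "q - 2 + 1 = q - 1" if "2 \<le> q" using that by simp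
  ultimately show ?thesis unfolding EpdT0_def by (cases "2 \<le> q") (auto simp: tx)
qed

lemma E8: "EpdT1 tv kk N (X q) f a = (if 0 < q \<and> q \<le> N then 1 / real kk * pd (tv (q * kk)) f a else 0)"
proof -
  have "(\<Sum>n<N. of_bool (X (n + 1) = X q) * pd (tv ((n + 1) * kk)) f a
                       + real (n + 1) * of_bool (tv (n + 1) = X q) * pd (tv (n + 1)) f a)
    = (if q - 1 \<in> {..<N} then of_bool (X (q - 1 + 1) = X q) * pd (tv ((q - 1 + 1) * kk)) f a
                       + real (q - 1 + 1) * of_bool (tv (q - 1 + 1) = X q) * pd (tv (q - 1 + 1)) f a else 0)"
    by (rule sum_single) (auto simp: tx)
  then show ?thesis unfolding EpdT1_def by (cases "q = 0") (auto simp: tx)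
qed

lemma E9: "EpdTP tv kk P N (X q) f a = (if q < N then 1 / real kk * pd (tv ((P + q) * kk)) f a else 0)"
proof -
  have "(\<Sum>n<N. of_bool (X n = X q) * pd (tv ((P + n) * kk)) f a
                       + real n * of_bool (tv n = X q) * pd (tv (P * kk + n)) f a)
    = (if q \<in> {..<N} then of_bool (X q = X q) * pd (tv ((P + q) * kk)) f a
                       + real q * of_bool (tv q = X q) * pd (tv (P * kk + q)) f a else 0)"
    by (rule sum_single) (auto simp: tx)
  then show ?thesis unfolding EpdTP_def by (auto simp: tx)
qed

end

lemma sum_trunc: fixes n0 N :: nat assumes "n0 \<le> N" "\<And>n. n0 \<le> n \<Longrightarrow> n < N \<Longrightarrow> G n = 0"
  shows "(\<Sum>n<N. G n) = (\<Sum>n<n0. G n)"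
proof (rule sum.mono_neutral_right)
  show "finite {..<N}" by simp
  show "{..<n0} \<subseteq> {..<N}" using assms(1) by auto
  show "\<forall>i\<in>{..<N} - {..<n0}. G i = 0" using assms(2) by auto
qed

lemma Epd_other:
  assumes "\<And>i. tv i \<noteq> v" "\<And>j. X j \<noteq> v"
  shows "EpdT0 tv kk N v f a = 0" "EpdT1 tv kk N v f a = 0" "EpdTP tv kk P N v f a = 0"
  unfolding EpdT0_def EpdT1_def EpdTP_def using assms by simp_all

lemma Emul_other:
  assumes "\<And>i. w \<noteq> tv i"
  shows "EmulT0 tv kk N w f a = 0" "EmulT1 tv kk N w f a = 0" "EmulTP tv kk P N w f a = 0"
  unfolding EmulT0_def EmulT1_def EmulTP_def using assms by simp_all

lemma XS0pd: "(\<Sum>n<N. real (n + 1) * of_bool (X (n + 1) = X q) * pd (X n) f a) = (if 0 < q \<and> q \<le> N then real q * pd (X (q - 1)) f a else 0)"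
proof -
  have "(\<Sum>n<N. real (n + 1) * of_bool (X (n + 1) = X q) * pd (X n) f a) =
     (if q - 1 \<in> {..<N} then real (q - 1 + 1) * of_bool (X (q - 1 + 1) = X q) * pd (X (q - 1)) f a else 0)"
    by (rule sum_single) auto
  then show ?thesis by (cases "q = 0") auto
qed

lemma XS1pd: "(\<Sum>n<N. real (n + 1) * of_bool (X (n + 1) = X q) * pd (X (n + 1)) f a) = (if 0 < q \<and> q \<le> N then real q * pd (X q) f a else 0)"
proof -
  have "(\<Sum>n<N. real (n + 1) * of_bool (X (n + 1) = X q) * pd (X (n + 1)) f a) =
     (if q - 1 \<in> {..<N} then real (q - 1 + 1) * of_bool (X (q - 1 + 1) = X q) * pd (X (q - 1 + 1)) f a else 0)"
    by (rule sum_single) auto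
  then show ?thesis by (cases "q = 0") auto
qed

lemma XSPpd: "(\<Sum>n<N. real (n + 1) * of_bool (X (n + 1) = X q) * pd (X (Suc P + n + 1)) f a) = (if 0 < q \<and> q \<le> N then real q * pd (X (Suc P + q)) f a else 0)"
proof -
  have "(\<Sum>n<N. real (n + 1) * of_bool (X (n + 1) = X q) * pd (X (Suc P + n + 1)) f a) =
     (if q - 1 \<in> {..<N} then real (q - 1 + 1) * of_bool (X (q - 1 + 1) = X q) * pd (X (Suc P + (q - 1) + 1)) f a else 0)"
    by (rule sum_single) auto
  then show ?thesis by (cases "q = 0") auto
qed

lemma XS0mul: "(\<Sum>n<N. real (n + 1) * a (X (n + 1)) * of_bool (X q = X n) * f a) = (if q < N then real (q + 1) * a (X (q + 1)) * f a else 0)"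
proof -
  have "(\<Sum>n<N. real (n + 1) * a (X (n + 1)) * of_bool (X q = X n) * f a) =
     (if q \<in> {..<N} then real (q + 1) * a (X (q + 1)) * of_bool (X q = X q) * f a else 0)"
    by (rule sum_single) auto
  then show ?thesis by auto
qed

lemma XS1mul: "(\<Sum>n<N. real (n + 1) * a (X (n + 1)) * of_bool (X q = X (n + 1)) * f a) = (if 0 < q \<and> q \<le> N then real q * a (X q) * f a else 0)"
proof -
  have "(\<Sum>n<N. real (n + 1) * a (X (n + 1)) * of_bool (X q = X (n + 1)) * f a) =
     (if q - 1 \<in> {..<N} then real (q - 1 + 1) * a (X (q - 1 + 1)) * of_bool (X q = X (q - 1 + 1)) * f a else 0)"
    by (rule sum_single) auto
  then show ?thesis by (cases "q = 0") auto
qed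

lemma XSPmul: "(\<Sum>n<N. real (n + 1) * a (X (n + 1)) * of_bool (X q = X (Suc P + n + 1)) * f a)
   = (if Suc P < q \<and> q < N + P + 2 then real (q - Suc P) * a (X (q - Suc P)) * f a else 0)"
proof -
  have "(\<Sum>n<N. real (n + 1) * a (X (n + 1)) * of_bool (X q = X (Suc P + n + 1)) * f a) =
     (if q - P - 2 \<in> {..<N} then real (q - P - 2 + 1) * a (X (q - P - 2 + 1)) * of_bool (X q = X (Suc P + (q - P - 2) + 1)) * f a else 0)"
    by (rule sum_single) auto
  moreover have "q - P - 2 + 1 = q - Suc P" if "Suc P < q" using that by simp
  ultimately show ?thesis by (cases "Suc P < q") auto
qed


definition gT0 :: "nat \<Rightarrow> nat \<Rightarrow> pt \<Rightarrow> real" where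
  "gT0 kk n0 a = 1 / real kk * (\<Sum>n<n0. a (X (n + 2)) * of_bool (n0 = (n + 1) * kk))"
definition gT1 :: "nat \<Rightarrow> nat \<Rightarrow> pt \<Rightarrow> real" where
  "gT1 kk n0 a = 1 / real kk * (\<Sum>n<n0. a (X (n + 1)) * of_bool (n0 = (n + 1) * kk))"
definition gTP :: "nat \<Rightarrow> nat \<Rightarrow> nat \<Rightarrow> pt \<Rightarrow> real" where
  "gTP kk P n0 a = 1 / real kk * (\<Sum>n = 1..<n0. a (X n) * of_bool (n0 = (P + n) * kk))"

context tvar begin

lemma E4: assumes kk: "0 < kk" and nN: "n0 \<le> N"
  shows "EmulT0 tv kk N (tv n0) f a = gT0 kk n0 a * f a
     + (if 0 < n0 then real (n0 + kk) / real kk * a (tv (n0 + kk)) * f a else 0)"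
proof -
  have A: "(\<Sum>n<N. a (X (n + 2)) * of_bool (tv n0 = tv ((n + 1) * kk)) * f a)
      = (\<Sum>n<n0. a (X (n + 2)) * of_bool (n0 = (n + 1) * kk)) * f a"
  proof -
    have "(\<Sum>n<N. a (X (n + 2)) * of_bool (tv n0 = tv ((n + 1) * kk)) * f a)
        = (\<Sum>n<n0. a (X (n + 2)) * of_bool (tv n0 = tv ((n + 1) * kk)) * f a)"
    proof (rule sum_trunc[OF nN])
      fix n assume "n0 \<le> n"
      moreover have "n + 1 \<le> (n + 1) * kk" using mult_le_mono2[of 1 kk "n+1"] kk by simp
      ultimately show "a (X (n + 2)) * of_bool (tv n0 = tv ((n + 1) * kk)) * f a = 0" by (simp add: inj)
    qed
    then show ?thesis by (simp only: inj sum_distrib_right)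
  qed
  have B: "(\<Sum>n<N. real (n + 1 + kk) * a (tv (n + 1 + kk)) * of_bool (tv n0 = tv (n + 1)) * f a)
     = (if 0 < n0 then real (n0 + kk) * a (tv (n0 + kk)) * f a else 0)"
  proof -
    have "(\<Sum>n<N. real (n + 1 + kk) * a (tv (n + 1 + kk)) * of_bool (tv n0 = tv (n + 1)) * f a)
      = (if n0 - 1 \<in> {..<N} then real (n0 - 1 + 1 + kk) * a (tv (n0 - 1 + 1 + kk)) * of_bool (tv n0 = tv (n0 - 1 + 1)) * f a else 0)"
      by (rule sum_single) (auto simp: inj)
    then show ?thesis using nN by (cases "n0 = 0") (auto simp: inj)
  qed
  show ?thesis unfolding EmulT0_def gT0_def sum.distrib A B by (auto simp: algebra_simps)
qed

lemma E5: assumes kk: "0 < kk" and nN: "n0 \<le> N"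
  shows "EmulT1 tv kk N (tv n0) f a = gT1 kk n0 a * f a
     + (if 0 < n0 then real n0 / real kk * a (tv n0) * f a else 0)"
proof -
  have A: "(\<Sum>n<N. a (X (n + 1)) * of_bool (tv n0 = tv ((n + 1) * kk)) * f a)
      = (\<Sum>n<n0. a (X (n + 1)) * of_bool (n0 = (n + 1) * kk)) * f a"
  proof -
    have "(\<Sum>n<N. a (X (n + 1)) * of_bool (tv n0 = tv ((n + 1) * kk)) * f a)
        = (\<Sum>n<n0. a (X (n + 1)) * of_bool (tv n0 = tv ((n + 1) * kk)) * f a)"
    proof (rule sum_trunc[OF nN])
      fix n assume "n0 \<le> n"
      moreover have "n + 1 \<le> (n + 1) * kk" using mult_le_mono2[of 1 kk "n+1"] kk by simp
      ultimately show "a (X (n + 1)) * of_bool (tv n0 = tv ((n + 1) * kk)) * f a = 0" by (simp add: inj)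
    qed
    then show ?thesis by (simp only: inj sum_distrib_right)
  qed
  have B: "(\<Sum>n<N. real (n + 1) * a (tv (n + 1)) * of_bool (tv n0 = tv (n + 1)) * f a)
     = (if 0 < n0 then real n0 * a (tv n0) * f a else 0)"
  proof -
    have "(\<Sum>n<N. real (n + 1) * a (tv (n + 1)) * of_bool (tv n0 = tv (n + 1)) * f a)
      = (if n0 - 1 \<in> {..<N} then real (n0 - 1 + 1) * a (tv (n0 - 1 + 1)) * of_bool (tv n0 = tv (n0 - 1 + 1)) * f a else 0)"
      by (rule sum_single) (auto simp: inj)
    then show ?thesis using nN by (cases "n0 = 0") (auto simp: inj)
  qed
  show ?thesis unfolding EmulT1_def gT1_def sum.distrib A B by (auto simp: algebra_simps)
qed

lemma E6: assumes kk: "0 < kk" and P: "0 < P" and nN: "n0 \<le> N" and n0: "0 < n0"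
  shows "EmulTP tv kk P N (tv n0) f a = gTP kk P n0 a * f a
     + (if P * kk < n0 then real (n0 - P * kk) / real kk * a (tv (n0 - P * kk)) * f a else 0)
     + (if n0 < P * kk then 1 / real kk * pd (tv (P * kk - n0)) f a else 0)
     + (if n0 = P * kk then 1 / real kk * a (X 0) * f a else 0)"
proof -
  have A: "(\<Sum>n<N. a (X n) * of_bool (tv n0 = tv ((P + n) * kk)) * f a)
      = (\<Sum>n = 1..<n0. a (X n) * of_bool (n0 = (P + n) * kk)) * f a + of_bool (n0 = P * kk) * a (X 0) * f a"
  proof -
    have "(\<Sum>n<N. a (X n) * of_bool (tv n0 = tv ((P + n) * kk)) * f a)
        = (\<Sum>n<n0. a (X n) * of_bool (tv n0 = tv ((P + n) * kk)) * f a)"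
    proof (rule sum_trunc[OF nN])
      fix n assume "n0 \<le> n"
      moreover have "P + n \<le> (P + n) * kk" using mult_le_mono2[of 1 kk "P+n"] kk by simp
      ultimately have "n0 \<noteq> (P + n) * kk" using P by linarith
      then show "a (X n) * of_bool (tv n0 = tv ((P + n) * kk)) * f a = 0" by (simp add: inj)
    qed
    also have "{..<n0} = insert 0 {1..<n0}" using n0 by auto
    also have "(\<Sum>n\<in>insert 0 {1..<n0}. a (X n) * of_bool (tv n0 = tv ((P + n) * kk)) * f a)
       = a (X 0) * of_bool (tv n0 = tv ((P + 0) * kk)) * f a + (\<Sum>n\<in>{1..<n0}. a (X n) * of_bool (tv n0 = tv ((P + n) * kk)) * f a)"
      by (rule sum.insert) auto
    also have "(\<Sum>n\<in>{1..<n0}. a (X n) * of_bool (tv n0 = tv ((P + n) * kk)) * f a)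
       = (\<Sum>n = 1..<n0. a (X n) * of_bool (n0 = (P + n) * kk)) * f a"
      by (simp only: inj sum_distrib_right)
    finally show ?thesis by (simp add: inj)
  qed
  have B: "(\<Sum>n<N. real n * a (tv n) * of_bool (tv n0 = tv (P * kk + n)) * f a)
     = (if P * kk < n0 then real (n0 - P * kk) * a (tv (n0 - P * kk)) * f a else 0)"
  proof -
    have "(\<Sum>n<N. real n * a (tv n) * of_bool (tv n0 = tv (P * kk + n)) * f a)
      = (if n0 - P * kk \<in> {..<N} then real (n0 - P * kk) * a (tv (n0 - P * kk)) * of_bool (tv n0 = tv (P * kk + (n0 - P * kk))) * f a else 0)"
      by (rule sum_single) (auto simp: inj)
    moreover have pk: "0 < P * kk" using P kk by simp
    have "n0 - P * kk < N" using pk nN n0 by linarith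
    ultimately show ?thesis by (cases "P * kk < n0") auto
  qed
  have C1: "(\<Sum>n = 1..<P * kk. of_bool (tv n0 = tv (P * kk - n)) * pd (tv n) f a)
     = (if n0 < P * kk then pd (tv (P * kk - n0)) f a else 0)"
  proof -
    have "(\<Sum>n = 1..<P * kk. of_bool (tv n0 = tv (P * kk - n)) * pd (tv n) f a)
       = (if P * kk - n0 \<in> {1..<P * kk} then of_bool (tv n0 = tv (P * kk - (P * kk - n0))) * pd (tv (P * kk - n0)) f a else 0)"
      by (rule sum_single) (auto simp: inj)
    then show ?thesis using n0 by auto
  qed
  have C2: "(\<Sum>n = 1..<P * kk. of_bool (tv n0 = tv n) * pd (tv (P * kk - n)) f a)
     = (if n0 < P * kk then pd (tv (P * kk - n0)) f a else 0)"
  proof -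
    have "(\<Sum>n = 1..<P * kk. of_bool (tv n0 = tv n) * pd (tv (P * kk - n)) f a)
       = (if n0 \<in> {1..<P * kk} then of_bool (tv n0 = tv n0) * pd (tv (P * kk - n0)) f a else 0)"
      by (rule sum_single) (auto simp: inj)
    then show ?thesis using n0 by auto
  qed
  show ?thesis unfolding EmulTP_def gTP_def sum.distrib A B C1 C2 by (auto simp: algebra_simps)
qed

end


interpretation T: tvar T by unfold_locales auto
interpretation TB: tvar TB by unfold_locales auto

lemma comm_pd: assumes f: "f \<in> Dom" and N: "fsup f N" and k: "0 < k" and m: "0 < m"
  shows "comm (pdo v) (Dop k m p) f a = pd v (DopF k m N p f) a - DopF k m N p (pd v f) a"
  unfolding comm_def pdo_def Dop_fin[OF N k m] Dop_fin[OF fsup_pd[OF N] k m] by simp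

lemma comm_mul: assumes N: "fsup f N" "idx w < N" and k: "0 < k" and m: "0 < m"
  shows "comm (Dop k m p) (mulv w) f a = DopF k m N p (\<lambda>a. a w * f a) a - a w * DopF k m N p f a"
  unfolding comm_def mulv_def Dop_fin[OF N(1) k m] Dop_fin[OF fsup_mult[OF N] k m] by simp

lemma Fsp_I: assumes "\<And>a b. (\<And>j. a (X (Suc j)) = b (X (Suc j))) \<Longrightarrow> g a = g b"
  shows "g \<in> Fsp"
  unfolding Fsp_def depends_only_def
proof (intro CollectI conjI allI impI)
  fix a b :: pt assume "\<forall>v\<in>range X. a v = b v"
  then show "g a = g b" by (intro assms) auto
next
  fix a :: pt show "g (a(X 0 := a (X 0) + 1)) = g a" by (rule assms) simp
qed

lemma Fsp_zero: "(\<lambda>a. 0) \<in> Fsp" by (rule Fsp_I) simp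

lemmas Ecomp = pdD0 pdD1 pdDP mulD0 mulD1 mulDP T.E1 T.E2 T.E3 T.E7 T.E8 T.E9 TB.E1 TB.E2 TB.E3 TB.E7 TB.E8 TB.E9
  Epd_other Emul_other XS0pd XS1pd XSPpd XS0mul XS1mul XSPmul

lemma C1: assumes k: "0 < k" and m: "0 < m"
  shows "\<forall>n p. 1 \<le> n \<longrightarrow> (1 \<le> p \<or> k < n) \<longrightarrow>
       modF (comm (pdo (T n)) (Dop k m p))
            (scaleo (real n / real k) (pdo (T (nat ((int p - 1) * int k + int n)))))"
proof (intro allI impI)
  fix n p :: nat assume n: "1 \<le> n" and pn: "1 \<le> p \<or> k < n"
  show "modF (comm (pdo (T n)) (Dop k m p))
            (scaleo (real n / real k) (pdo (T (nat ((int p - 1) * int k + int n)))))"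
    unfolding modF_def
  proof (intro bexI[of _ "\<lambda>a. 0"] ballI allI)
    fix f a assume f: "f \<in> Dom"
    obtain N where N: "n + k + 2 \<le> N" "fsup f N" using Dom_fsup_ge[OF f] by blast
    have c: "comm (pdo (T n)) (Dop k m p) f a = pd (T n) (DopF k m N p f) a - DopF k m N p (pd (T n) f) a"
      by (rule comm_pd[OF f N(2) k m])
    show "comm (pdo (T n)) (Dop k m p) f a = scaleo (real n / real k) (pdo (T (nat ((int p - 1) * int k + int n)))) f a + 0 * f a"
    proof (cases p)
      case 0
      then have kn: "k < n" using pn by simp
      have e: "nat ((int p - 1) * int k + int n) = n - k" using 0 kn by simp
      show ?thesis unfolding c scaleo_def e unfolding 0 pdD0[OF f] using N(1) kn n by (simp add: Ecomp f pdo_def del: DopF.simps)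
    next
      case (Suc p')
      show ?thesis
      proof (cases p')
        case 0
        have e: "nat ((int p - 1) * int k + int n) = n" using Suc 0 by simp
        show ?thesis unfolding c scaleo_def e unfolding Suc 0 pdD1[OF f] using N(1) n by (simp add: Ecomp f pdo_def del: DopF.simps)
      next
        case (Suc q)
        have "(int p - 1) * int k + int n = int (Suc q * k + n)" using Suc \<open>p = Suc p'\<close> by (simp add: algebra_simps)
        then have e: "nat ((int p - 1) * int k + int n) = Suc q * k + n" by (simp only: nat_int)
        show ?thesis unfolding c scaleo_def e unfolding \<open>p = Suc p'\<close> Suc pdDP[OF f] using N(1) n by (simp add: Ecomp f pdo_def del: DopF.simps)
      qed
    qed
  qed (rule Fsp_zero)
qed


definition gsel :: "nat \<Rightarrow> nat \<Rightarrow> nat \<Rightarrow> pt \<Rightarrow> real" where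
  "gsel kk n p = (case p of 0 \<Rightarrow> gT0 kk n | Suc 0 \<Rightarrow> gT1 kk n | Suc (Suc q) \<Rightarrow> gTP kk (Suc q) n)"

lemma gsel_Fsp: "gsel kk n p \<in> Fsp"
proof (rule Fsp_I)
  fix a b :: pt assume ab: "\<And>j. a (X (Suc j)) = b (X (Suc j))"
  have ab': "a (X j) = b (X j)" if "1 \<le> j" for j using ab[of "j - 1"] that by simp
  show "gsel kk n p a = gsel kk n p b"
  proof (cases p)
    case 0 then show ?thesis unfolding gsel_def gT0_def using ab'
      by (simp del: One_nat_def add: numeral_2_eq_2 ab)
  next
    case (Suc p') then show ?thesis
    proof (cases p')
      case 0 then show ?thesis unfolding gsel_def gT1_def using \<open>p = Suc p'\<close> ab by simp
    next
      case (Suc q)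
      have "(\<Sum>j = 1..<n. a (X j) * of_bool (n = (Suc q + j) * kk)) = (\<Sum>j = 1..<n. b (X j) * of_bool (n = (Suc q + j) * kk))"
        by (rule sum.cong) (auto simp: ab')
      then show ?thesis unfolding gsel_def gTP_def using \<open>p = Suc p'\<close> Suc by simp
    qed
  qed
qed

lemma C2: assumes k: "0 < k" and m: "0 < m"
  shows "\<forall>n. 1 \<le> n \<longrightarrow> n < k \<longrightarrow>
       modF (comm (pdo (T n)) (Dop k m 0))
            (scaleo (real n / real k * real (k - n)) (mulv (T (k - n))))"
proof (intro allI impI)
  fix n :: nat assume n: "1 \<le> n" and nk: "n < k"
  show "modF (comm (pdo (T n)) (Dop k m 0)) (scaleo (real n / real k * real (k - n)) (mulv (T (k - n))))"
    unfolding modF_def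
  proof (intro bexI[of _ "\<lambda>a. 0"] ballI allI)
    fix f a assume f: "f \<in> Dom"
    obtain N where N: "n + k + 2 \<le> N" "fsup f N" using Dom_fsup_ge[OF f] by blast
    have c: "comm (pdo (T n)) (Dop k m 0) f a = pd (T n) (DopF k m N 0 f) a - DopF k m N 0 (pd (T n) f) a"
      by (rule comm_pd[OF f N(2) k m])
    show "comm (pdo (T n)) (Dop k m 0) f a = scaleo (real n / real k * real (k - n)) (mulv (T (k - n))) f a + 0 * f a"
      unfolding c scaleo_def mulv_def pdD0[OF f] using N(1) nk n by (simp add: Ecomp f del: DopF.simps)
  qed (rule Fsp_zero)
qed

lemma C3: assumes k: "0 < k" and m: "0 < m"
  shows "modF (comm (pdo (T k)) (Dop k m 0)) (mulv (X 0))"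
  unfolding modF_def
proof (intro bexI[of _ "\<lambda>a. 0"] ballI allI)
  fix f a assume f: "f \<in> Dom"
  obtain N where N: "k + 2 \<le> N" "fsup f N" using Dom_fsup_ge[OF f] by blast
  have c: "comm (pdo (T k)) (Dop k m 0) f a = pd (T k) (DopF k m N 0 f) a - DopF k m N 0 (pd (T k) f) a"
    by (rule comm_pd[OF f N(2) k m])
  show "comm (pdo (T k)) (Dop k m 0) f a = mulv (X 0) f a + 0 * f a"
    unfolding c mulv_def pdD0[OF f] using N(1) by (simp add: Ecomp f del: DopF.simps)
qed (rule Fsp_zero)

lemma C4: assumes k: "0 < k" and m: "0 < m"
  shows "\<forall>n p. 1 \<le> n \<longrightarrow> int n < (int p - 1) * int k \<longrightarrow>
       modF (comm (Dop k m p) (mulv (T n)))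
            (scaleo (1 / real k) (pdo (T (nat ((int p - 1) * int k - int n)))))"
proof (intro allI impI)
  fix n p :: nat assume n: "1 \<le> n" and pn: "int n < (int p - 1) * int k"
  obtain q where p: "p = Suc (Suc q)"
  proof (cases p)
    case 0 then show ?thesis using pn k by simp
  next
    case (Suc p') then show ?thesis using pn that by (cases p') auto
  qed
  have i: "(int p - 1) * int k = int (Suc q * k)" using p by (simp add: algebra_simps)
  have nq: "n < Suc q * k" using pn unfolding i by (simp only: of_nat_less_iff)
  have "(int p - 1) * int k - int n = int (Suc q * k - n)" using i nq by (simp only: of_nat_diff less_imp_le)
  then have e: "nat ((int p - 1) * int k - int n) = Suc q * k - n" by (simp only: nat_int)
  show "modF (comm (Dop k m p) (mulv (T n))) (scaleo (1 / real k) (pdo (T (nat ((int p - 1) * int k - int n)))))"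
    unfolding modF_def
  proof (intro bexI[of _ "gsel k n p"] ballI allI)
    fix f a assume f: "f \<in> Dom"
    obtain N where N: "n + k + 2 \<le> N" "fsup f N" using Dom_fsup_ge[OF f] by blast
    have c: "comm (Dop k m p) (mulv (T n)) f a = DopF k m N p (\<lambda>a. a (T n) * f a) a - a (T n) * DopF k m N p f a"
      by (rule comm_mul[OF N(2) _ k m]) (use N(1) in simp)
    show "comm (Dop k m p) (mulv (T n)) f a = scaleo (1 / real k) (pdo (T (nat ((int p - 1) * int k - int n)))) f a + gsel k n p a * f a"
      unfolding c scaleo_def e unfolding p mulDP[OF f] using N(1) nq n k
      by (simp add: Ecomp f pdo_def gsel_def T.E6 del: DopF.simps)
  qed (rule gsel_Fsp)
qed


lemma C5: assumes k: "0 < k" and m: "0 < m"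
  shows "\<forall>n p. 1 \<le> n \<longrightarrow> int n > (int p - 1) * int k \<longrightarrow>
       modF (comm (Dop k m p) (mulv (T n)))
            (scaleo (real_of_int (int n - (int p - 1) * int k) / real k)
                    (mulv (T (nat (int n - (int p - 1) * int k)))))"
proof (intro allI impI)
  fix n p :: nat assume n: "1 \<le> n" and pn: "int n > (int p - 1) * int k"
  show "modF (comm (Dop k m p) (mulv (T n)))
            (scaleo (real_of_int (int n - (int p - 1) * int k) / real k)
                    (mulv (T (nat (int n - (int p - 1) * int k)))))"
    unfolding modF_def
  proof (intro bexI[of _ "gsel k n p"] ballI allI)
    fix f a assume f: "f \<in> Dom"
    obtain N where N: "n + k + 2 \<le> N" "fsup f N" using Dom_fsup_ge[OF f] by blast
    have c: "comm (Dop k m p) (mulv (T n)) f a = DopF k m N p (\<lambda>a. a (T n) * f a) a - a (T n) * DopF k m N p f a"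
      by (rule comm_mul[OF N(2) _ k m]) (use N(1) in simp)
    show "comm (Dop k m p) (mulv (T n)) f a = scaleo (real_of_int (int n - (int p - 1) * int k) / real k)
                    (mulv (T (nat (int n - (int p - 1) * int k)))) f a + gsel k n p a * f a"
    proof (cases p)
      case 0
      have z: "int n - (int p - 1) * int k = int (n + k)" using 0 by simp
      show ?thesis unfolding c unfolding scaleo_def mulv_def z of_int_of_nat_eq nat_int unfolding 0 mulD0[OF f]
        using N(1) n k by (simp add: Ecomp f gsel_def T.E4 del: DopF.simps)
    next
      case (Suc p')
      show ?thesis
      proof (cases p')
        case 0
        have z: "int n - (int p - 1) * int k = int n" using Suc 0 by simp
        show ?thesis unfolding c unfolding scaleo_def mulv_def z of_int_of_nat_eq nat_int unfolding Suc 0 mulD1[OF f]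
          using N(1) n k by (simp add: Ecomp f gsel_def T.E5 del: DopF.simps)
      next
        case (Suc q)
        have i: "(int p - 1) * int k = int (Suc q * k)" using Suc \<open>p = Suc p'\<close> by (simp add: algebra_simps)
        have nq: "Suc q * k < n" using pn unfolding i by (simp only: of_nat_less_iff)
        have z: "int n - (int p - 1) * int k = int (n - Suc q * k)" using i nq by (simp only: of_nat_diff less_imp_le)
        show ?thesis unfolding c unfolding scaleo_def mulv_def z of_int_of_nat_eq nat_int unfolding \<open>p = Suc p'\<close> Suc mulDP[OF f]
          using N(1) n k nq by (simp add: Ecomp f gsel_def T.E6 del: DopF.simps)
      qed
    qed
  qed (rule gsel_Fsp)
qed

lemma C6: assumes k: "0 < k" and m: "0 < m"
  shows "\<forall>n p. 1 \<le> n \<longrightarrow> int n = (int p - 1) * int k \<longrightarrow>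
       modF (comm (Dop k m p) (mulv (T n))) (scaleo (1 / real k) (mulv (X 0)))"
proof (intro allI impI)
  fix n p :: nat assume n: "1 \<le> n" and pn: "int n = (int p - 1) * int k"
  obtain q where p: "p = Suc (Suc q)"
  proof (cases p)
    case 0 then show ?thesis using pn k n by simp
  next
    case (Suc p') then show ?thesis using pn that n by (cases p') auto
  qed
  have i: "(int p - 1) * int k = int (Suc q * k)" using p by (simp add: algebra_simps)
  have nq: "n = Suc q * k" using pn unfolding i by (simp only: of_nat_eq_iff)
  show "modF (comm (Dop k m p) (mulv (T n))) (scaleo (1 / real k) (mulv (X 0)))"
    unfolding modF_def
  proof (intro bexI[of _ "gsel k n p"] ballI allI)
    fix f a assume f: "f \<in> Dom"
    obtain N where N: "n + k + 2 \<le> N" "fsup f N" using Dom_fsup_ge[OF f] by blast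
    have c: "comm (Dop k m p) (mulv (T n)) f a = DopF k m N p (\<lambda>a. a (T n) * f a) a - a (T n) * DopF k m N p f a"
      by (rule comm_mul[OF N(2) _ k m]) (use N(1) in simp)
    show "comm (Dop k m p) (mulv (T n)) f a = scaleo (1 / real k) (mulv (X 0)) f a + gsel k n p a * f a"
      unfolding c unfolding scaleo_def mulv_def unfolding p mulDP[OF f] using N(1) n k nq
      by (simp add: Ecomp f gsel_def T.E6 del: DopF.simps)
  qed (rule gsel_Fsp)
qed

lemma C13: assumes k: "0 < k" and m: "0 < m"
  shows "\<forall>p q. p + q > 1 \<longrightarrow>
       modF (comm (pdo (X q)) (Dop k m p))
            (\<lambda>f a. real q * pd (X (p + q - 1)) f a
                   + 1 / real k * pd (T ((p + q - 1) * k)) f a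
                   + 1 / real m * pd (TB ((p + q - 1) * m)) f a)"
proof (intro allI impI)
  fix p q :: nat assume pq: "p + q > 1"
  show "modF (comm (pdo (X q)) (Dop k m p))
            (\<lambda>f a. real q * pd (X (p + q - 1)) f a
                   + 1 / real k * pd (T ((p + q - 1) * k)) f a
                   + 1 / real m * pd (TB ((p + q - 1) * m)) f a)"
    unfolding modF_def
  proof (intro bexI[of _ "\<lambda>a. 0"] ballI allI)
    fix f a assume f: "f \<in> Dom"
    obtain N where N: "q + 2 \<le> N" "fsup f N" using Dom_fsup_ge[OF f] by blast
    have c: "comm (pdo (X q)) (Dop k m p) f a = pd (X q) (DopF k m N p f) a - DopF k m N p (pd (X q) f) a"
      by (rule comm_pd[OF f N(2) k m])
    show "comm (pdo (X q)) (Dop k m p) f a = real q * pd (X (p + q - 1)) f a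
                   + 1 / real k * pd (T ((p + q - 1) * k)) f a
                   + 1 / real m * pd (TB ((p + q - 1) * m)) f a + 0 * f a"
    proof (cases p)
      case 0
      then have q2: "2 \<le> q" using pq by simp
      show ?thesis unfolding c unfolding 0 pdD0[OF f] XS0pd using N(1) q2 by (simp add: Ecomp f del: DopF.simps)
    next
      case (Suc p')
      show ?thesis
      proof (cases p')
        case 0
        then have q1: "1 \<le> q" using pq Suc by simp
        show ?thesis unfolding c unfolding Suc 0 pdD1[OF f] XS1pd using N(1) q1 by (simp add: Ecomp f del: DopF.simps)
      next
        case (Suc P)
        show ?thesis unfolding c unfolding \<open>p = Suc p'\<close> Suc pdDP[OF f] XSPpd using N(1)
          by (cases "q = 0") (simp_all add: Ecomp f algebra_simps del: DopF.simps)
      qed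
    qed
  qed (rule Fsp_zero)
qed

lemma C14: assumes k: "0 < k" and m: "0 < m"
  shows "\<forall>p q. p + q = 1 \<longrightarrow>
       modF (comm (pdo (X q)) (Dop k m p))
            (\<lambda>f a. real q * pd (X 0) f a + (1 / real k + 1 / real m) * a (X 0) * f a)"
proof (intro allI impI)
  fix p q :: nat assume pq: "p + q = 1"
  show "modF (comm (pdo (X q)) (Dop k m p))
            (\<lambda>f a. real q * pd (X 0) f a + (1 / real k + 1 / real m) * a (X 0) * f a)"
    unfolding modF_def
  proof (intro bexI[of _ "\<lambda>a. 0"] ballI allI)
    fix f a assume f: "f \<in> Dom"
    obtain N where N: "q + 2 \<le> N" "fsup f N" using Dom_fsup_ge[OF f] by blast
    have c: "comm (pdo (X q)) (Dop k m p) f a = pd (X q) (DopF k m N p f) a - DopF k m N p (pd (X q) f) a"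
      by (rule comm_pd[OF f N(2) k m])
    show "comm (pdo (X q)) (Dop k m p) f a = real q * pd (X 0) f a + (1 / real k + 1 / real m) * a (X 0) * f a + 0 * f a"
    proof (cases p)
      case 0
      then have q1: "q = 1" using pq by simp
      show ?thesis unfolding c unfolding 0 q1 pdD0[OF f] XS0pd using N(1) by (simp add: Ecomp f algebra_simps del: DopF.simps)
    next
      case (Suc p')
      then have "p' = 0" "q = 0" using pq by auto
      then show ?thesis unfolding c unfolding Suc pdD1[OF f] XS1pd using N(1) by (simp add: Ecomp f algebra_simps del: DopF.simps)
    qed
  qed (rule Fsp_zero)
qed

lemma C15: assumes k: "0 < k" and m: "0 < m"
  shows "modF (comm (pdo (X 0)) (Dop k m 0)) (\<lambda>f a. (a (T k) + a (TB m)) * f a)"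
  unfolding modF_def
proof (intro bexI[of _ "\<lambda>a. (1 / real k + 1 / real m) * a (X 1)"] ballI allI)
  fix f a assume f: "f \<in> Dom"
  obtain N where N: "2 \<le> N" "fsup f N" using Dom_fsup_ge[OF f] by blast
  have c: "comm (pdo (X 0)) (Dop k m 0) f a = pd (X 0) (DopF k m N 0 f) a - DopF k m N 0 (pd (X 0) f) a"
    by (rule comm_pd[OF f N(2) k m])
  show "comm (pdo (X 0)) (Dop k m 0) f a = (a (T k) + a (TB m)) * f a + (1 / real k + 1 / real m) * a (X 1) * f a"
    unfolding c pdD0[OF f] XS0pd using N(1) by (simp add: Ecomp f algebra_simps del: DopF.simps)
next
  show "(\<lambda>a. (1 / real k + 1 / real m) * a (X 1)) \<in> Fsp" by (rule Fsp_I) simp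
qed

definition gX :: "nat \<Rightarrow> nat \<Rightarrow> pt \<Rightarrow> real" where
  "gX p q a = (case p of 0 \<Rightarrow> real (q + 1) * a (X (q + 1)) | Suc 0 \<Rightarrow> real q * a (X q)
      | Suc (Suc P) \<Rightarrow> (if Suc P < q then real (q - Suc P) * a (X (q - Suc P)) else 0))"

lemma gX_Fsp: "gX p q \<in> Fsp"
proof (rule Fsp_I)
  fix a b :: pt assume ab: "\<And>j. a (X (Suc j)) = b (X (Suc j))"
  have ab': "a (X j) = b (X j)" if "1 \<le> j" for j using ab[of "j - 1"] that by simp
  show "gX p q a = gX p q b" unfolding gX_def
    by (cases p; cases "p - 1"; cases "q = 0") (auto simp: ab ab')
qed

lemma C16: assumes k: "0 < k" and m: "0 < m"
  shows "\<forall>p q. modF (comm (Dop k m p) (mulv (X q))) (\<lambda>f a. 0)"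
proof (intro allI)
  fix p q :: nat
  show "modF (comm (Dop k m p) (mulv (X q))) (\<lambda>f a. 0)"
    unfolding modF_def
  proof (intro bexI[of _ "gX p q"] ballI allI)
    fix f a assume f: "f \<in> Dom"
    obtain N where N: "q + 2 \<le> N" "fsup f N" using Dom_fsup_ge[OF f] by blast
    have c: "comm (Dop k m p) (mulv (X q)) f a = DopF k m N p (\<lambda>a. a (X q) * f a) a - a (X q) * DopF k m N p f a"
      by (rule comm_mul[OF N(2) _ k m]) (use N(1) in simp)
    show "comm (Dop k m p) (mulv (X q)) f a = 0 + gX p q a * f a"
    proof (cases p)
      case 0
      show ?thesis unfolding c unfolding 0 mulD0[OF f] XS0mul using N(1) by (simp add: Ecomp f gX_def del: DopF.simps)
    next
      case (Suc p')
      show ?thesis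
      proof (cases p')
        case 0
        show ?thesis unfolding c unfolding Suc 0 mulD1[OF f] XS1mul using N(1) by (simp add: Ecomp f gX_def del: DopF.simps)
      next
        case (Suc P)
        show ?thesis unfolding c unfolding \<open>p = Suc p'\<close> Suc mulDP[OF f] XSPmul using N(1) by (simp add: Ecomp f gX_def del: DopF.simps)
      qed
    qed
  qed (rule gX_Fsp)
qed

lemma CB1: assumes k: "0 < k" and m: "0 < m"
  shows "\<forall>n p. 1 \<le> n \<longrightarrow> (1 \<le> p \<or> m < n) \<longrightarrow>
       modF (comm (pdo (TB n)) (Dop k m p))
            (scaleo (real n / real m) (pdo (TB (nat ((int p - 1) * int m + int n)))))"
proof (intro allI impI)
  fix n p :: nat assume n: "1 \<le> n" and pn: "1 \<le> p \<or> m < n"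
  show "modF (comm (pdo (TB n)) (Dop k m p))
            (scaleo (real n / real m) (pdo (TB (nat ((int p - 1) * int m + int n)))))"
    unfolding modF_def
  proof (intro bexI[of _ "\<lambda>a. 0"] ballI allI)
    fix f a assume f: "f \<in> Dom"
    obtain N where N: "n + m + 2 \<le> N" "fsup f N" using Dom_fsup_ge[OF f] by blast
    have c: "comm (pdo (TB n)) (Dop k m p) f a = pd (TB n) (DopF k m N p f) a - DopF k m N p (pd (TB n) f) a"
      by (rule comm_pd[OF f N(2) k m])
    show "comm (pdo (TB n)) (Dop k m p) f a = scaleo (real n / real m) (pdo (TB (nat ((int p - 1) * int m + int n)))) f a + 0 * f a"
    proof (cases p)
      case 0
      then have kn: "m < n" using pn by simp
      have e: "nat ((int p - 1) * int m + int n) = n - m" using 0 kn by simp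
      show ?thesis unfolding c scaleo_def e unfolding 0 pdD0[OF f] using N(1) kn n by (simp add: Ecomp f pdo_def del: DopF.simps)
    next
      case (Suc p')
      show ?thesis
      proof (cases p')
        case 0
        have e: "nat ((int p - 1) * int m + int n) = n" using Suc 0 by simp
        show ?thesis unfolding c scaleo_def e unfolding Suc 0 pdD1[OF f] using N(1) n by (simp add: Ecomp f pdo_def del: DopF.simps)
      next
        case (Suc q)
        have "(int p - 1) * int m + int n = int (Suc q * m + n)" using Suc \<open>p = Suc p'\<close> by (simp add: algebra_simps)
        then have e: "nat ((int p - 1) * int m + int n) = Suc q * m + n" by (simp only: nat_int)
        show ?thesis unfolding c scaleo_def e unfolding \<open>p = Suc p'\<close> Suc pdDP[OF f] using N(1) n by (simp add: Ecomp f pdo_def del: DopF.simps)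
      qed
    qed
  qed (rule Fsp_zero)
qed



lemma CB2: assumes k: "0 < k" and m: "0 < m"
  shows "\<forall>n. 1 \<le> n \<longrightarrow> n < m \<longrightarrow>
       modF (comm (pdo (TB n)) (Dop k m 0))
            (scaleo (real n / real m * real (m - n)) (mulv (TB (m - n))))"
proof (intro allI impI)
  fix n :: nat assume n: "1 \<le> n" and nk: "n < m"
  show "modF (comm (pdo (TB n)) (Dop k m 0)) (scaleo (real n / real m * real (m - n)) (mulv (TB (m - n))))"
    unfolding modF_def
  proof (intro bexI[of _ "\<lambda>a. 0"] ballI allI)
    fix f a assume f: "f \<in> Dom"
    obtain N where N: "n + m + 2 \<le> N" "fsup f N" using Dom_fsup_ge[OF f] by blast
    have c: "comm (pdo (TB n)) (Dop k m 0) f a = pd (TB n) (DopF k m N 0 f) a - DopF k m N 0 (pd (TB n) f) a"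
      by (rule comm_pd[OF f N(2) k m])
    show "comm (pdo (TB n)) (Dop k m 0) f a = scaleo (real n / real m * real (m - n)) (mulv (TB (m - n))) f a + 0 * f a"
      unfolding c scaleo_def mulv_def pdD0[OF f] using N(1) nk n by (simp add: Ecomp f del: DopF.simps)
  qed (rule Fsp_zero)
qed


lemma CB3: assumes k: "0 < k" and m: "0 < m"
  shows "modF (comm (pdo (TB m)) (Dop k m 0)) (mulv (X 0))"
  unfolding modF_def
proof (intro bexI[of _ "\<lambda>a. 0"] ballI allI)
  fix f a assume f: "f \<in> Dom"
  obtain N where N: "m + 2 \<le> N" "fsup f N" using Dom_fsup_ge[OF f] by blast
  have c: "comm (pdo (TB m)) (Dop k m 0) f a = pd (TB m) (DopF k m N 0 f) a - DopF k m N 0 (pd (TB m) f) a"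
    by (rule comm_pd[OF f N(2) k m])
  show "comm (pdo (TB m)) (Dop k m 0) f a = mulv (X 0) f a + 0 * f a"
    unfolding c mulv_def pdD0[OF f] using N(1) by (simp add: Ecomp f del: DopF.simps)
qed (rule Fsp_zero)


lemma CB4: assumes k: "0 < k" and m: "0 < m"
  shows "\<forall>n p. 1 \<le> n \<longrightarrow> int n < (int p - 1) * int m \<longrightarrow>
       modF (comm (Dop k m p) (mulv (TB n)))
            (scaleo (1 / real m) (pdo (TB (nat ((int p - 1) * int m - int n)))))"
proof (intro allI impI)
  fix n p :: nat assume n: "1 \<le> n" and pn: "int n < (int p - 1) * int m"
  obtain q where p: "p = Suc (Suc q)"
  proof (cases p)
    case 0 then show ?thesis using pn m by simp
  next
    case (Suc p') then show ?thesis using pn that by (cases p') auto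
  qed
  have i: "(int p - 1) * int m = int (Suc q * m)" using p by (simp add: algebra_simps)
  have nq: "n < Suc q * m" using pn unfolding i by (simp only: of_nat_less_iff)
  have "(int p - 1) * int m - int n = int (Suc q * m - n)" using i nq by (simp only: of_nat_diff less_imp_le)
  then have e: "nat ((int p - 1) * int m - int n) = Suc q * m - n" by (simp only: nat_int)
  show "modF (comm (Dop k m p) (mulv (TB n))) (scaleo (1 / real m) (pdo (TB (nat ((int p - 1) * int m - int n)))))"
    unfolding modF_def
  proof (intro bexI[of _ "gsel m n p"] ballI allI)
    fix f a assume f: "f \<in> Dom"
    obtain N where N: "n + m + 2 \<le> N" "fsup f N" using Dom_fsup_ge[OF f] by blast
    have c: "comm (Dop k m p) (mulv (TB n)) f a = DopF k m N p (\<lambda>a. a (TB n) * f a) a - a (TB n) * DopF k m N p f a"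
      by (rule comm_mul[OF N(2) _ k m]) (use N(1) in simp)
    show "comm (Dop k m p) (mulv (TB n)) f a = scaleo (1 / real m) (pdo (TB (nat ((int p - 1) * int m - int n)))) f a + gsel m n p a * f a"
      unfolding c scaleo_def e unfolding p mulDP[OF f] using N(1) nq n m
      by (simp add: Ecomp f pdo_def gsel_def TB.E6 del: DopF.simps)
  qed (rule gsel_Fsp)
qed



lemma CB5: assumes k: "0 < k" and m: "0 < m"
  shows "\<forall>n p. 1 \<le> n \<longrightarrow> int n > (int p - 1) * int m \<longrightarrow>
       modF (comm (Dop k m p) (mulv (TB n)))
            (scaleo (real_of_int (int n - (int p - 1) * int m) / real m)
                    (mulv (TB (nat (int n - (int p - 1) * int m)))))"
proof (intro allI impI)
  fix n p :: nat assume n: "1 \<le> n" and pn: "int n > (int p - 1) * int m"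
  show "modF (comm (Dop k m p) (mulv (TB n)))
            (scaleo (real_of_int (int n - (int p - 1) * int m) / real m)
                    (mulv (TB (nat (int n - (int p - 1) * int m)))))"
    unfolding modF_def
  proof (intro bexI[of _ "gsel m n p"] ballI allI)
    fix f a assume f: "f \<in> Dom"
    obtain N where N: "n + m + 2 \<le> N" "fsup f N" using Dom_fsup_ge[OF f] by blast
    have c: "comm (Dop k m p) (mulv (TB n)) f a = DopF k m N p (\<lambda>a. a (TB n) * f a) a - a (TB n) * DopF k m N p f a"
      by (rule comm_mul[OF N(2) _ k m]) (use N(1) in simp)
    show "comm (Dop k m p) (mulv (TB n)) f a = scaleo (real_of_int (int n - (int p - 1) * int m) / real m)
                    (mulv (TB (nat (int n - (int p - 1) * int m)))) f a + gsel m n p a * f a"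
    proof (cases p)
      case 0
      have z: "int n - (int p - 1) * int m = int (n + m)" using 0 by simp
      show ?thesis unfolding c unfolding scaleo_def mulv_def z of_int_of_nat_eq nat_int unfolding 0 mulD0[OF f]
        using N(1) n m by (simp add: Ecomp f gsel_def TB.E4 del: DopF.simps)
    next
      case (Suc p')
      show ?thesis
      proof (cases p')
        case 0
        have z: "int n - (int p - 1) * int m = int n" using Suc 0 by simp
        show ?thesis unfolding c unfolding scaleo_def mulv_def z of_int_of_nat_eq nat_int unfolding Suc 0 mulD1[OF f]
          using N(1) n m by (simp add: Ecomp f gsel_def TB.E5 del: DopF.simps)
      next
        case (Suc q)
        have i: "(int p - 1) * int m = int (Suc q * m)" using Suc \<open>p = Suc p'\<close> by (simp add: algebra_simps)
        have nq: "Suc q * m < n" using pn unfolding i by (simp only: of_nat_less_iff)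
        have z: "int n - (int p - 1) * int m = int (n - Suc q * m)" using i nq by (simp only: of_nat_diff less_imp_le)
        show ?thesis unfolding c unfolding scaleo_def mulv_def z of_int_of_nat_eq nat_int unfolding \<open>p = Suc p'\<close> Suc mulDP[OF f]
          using N(1) n m nq by (simp add: Ecomp f gsel_def TB.E6 del: DopF.simps)
      qed
    qed
  qed (rule gsel_Fsp)
qed


lemma CB6: assumes k: "0 < k" and m: "0 < m"
  shows "\<forall>n p. 1 \<le> n \<longrightarrow> int n = (int p - 1) * int m \<longrightarrow>
       modF (comm (Dop k m p) (mulv (TB n))) (scaleo (1 / real m) (mulv (X 0)))"
proof (intro allI impI)
  fix n p :: nat assume n: "1 \<le> n" and pn: "int n = (int p - 1) * int m"
  obtain q where p: "p = Suc (Suc q)"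
  proof (cases p)
    case 0 then show ?thesis using pn m n by simp
  next
    case (Suc p') then show ?thesis using pn that n by (cases p') auto
  qed
  have i: "(int p - 1) * int m = int (Suc q * m)" using p by (simp add: algebra_simps)
  have nq: "n = Suc q * m" using pn unfolding i by (simp only: of_nat_eq_iff)
  show "modF (comm (Dop k m p) (mulv (TB n))) (scaleo (1 / real m) (mulv (X 0)))"
    unfolding modF_def
  proof (intro bexI[of _ "gsel m n p"] ballI allI)
    fix f a assume f: "f \<in> Dom"
    obtain N where N: "n + m + 2 \<le> N" "fsup f N" using Dom_fsup_ge[OF f] by blast
    have c: "comm (Dop k m p) (mulv (TB n)) f a = DopF k m N p (\<lambda>a. a (TB n) * f a) a - a (TB n) * DopF k m N p f a"
      by (rule comm_mul[OF N(2) _ k m]) (use N(1) in simp)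
    show "comm (Dop k m p) (mulv (TB n)) f a = scaleo (1 / real m) (mulv (X 0)) f a + gsel m n p a * f a"
      unfolding c unfolding scaleo_def mulv_def unfolding p mulDP[OF f] using N(1) n m nq
      by (simp add: Ecomp f gsel_def TB.E6 del: DopF.simps)
  qed (rule gsel_Fsp)
qed



theorem lemma4p5:
  fixes k m :: nat
  assumes "0 < k" and "0 < m"
  shows
   "(\<forall>n p. 1 \<le> n \<longrightarrow> (1 \<le> p \<or> k < n) \<longrightarrow>
       modF (comm (pdo (T n)) (Dop k m p))
            (scaleo (real n / real k) (pdo (T (nat ((int p - 1) * int k + int n)))))) \<and>
    (\<forall>n. 1 \<le> n \<longrightarrow> n < k \<longrightarrow>
       modF (comm (pdo (T n)) (Dop k m 0))
            (scaleo (real n / real k * real (k - n)) (mulv (T (k - n))))) \<and>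
    modF (comm (pdo (T k)) (Dop k m 0)) (mulv (X 0)) \<and>
    (\<forall>n p. 1 \<le> n \<longrightarrow> int n < (int p - 1) * int k \<longrightarrow>
       modF (comm (Dop k m p) (mulv (T n)))
            (scaleo (1 / real k) (pdo (T (nat ((int p - 1) * int k - int n)))))) \<and>
    (\<forall>n p. 1 \<le> n \<longrightarrow> int n > (int p - 1) * int k \<longrightarrow>
       modF (comm (Dop k m p) (mulv (T n)))
            (scaleo (real_of_int (int n - (int p - 1) * int k) / real k)
                    (mulv (T (nat (int n - (int p - 1) * int k)))))) \<and>
    (\<forall>n p. 1 \<le> n \<longrightarrow> int n = (int p - 1) * int k \<longrightarrow>
       modF (comm (Dop k m p) (mulv (T n))) (scaleo (1 / real k) (mulv (X 0)))) \<and>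
    (\<forall>n p. 1 \<le> n \<longrightarrow> (1 \<le> p \<or> m < n) \<longrightarrow>
       modF (comm (pdo (TB n)) (Dop k m p))
            (scaleo (real n / real m) (pdo (TB (nat ((int p - 1) * int m + int n)))))) \<and>
    (\<forall>n. 1 \<le> n \<longrightarrow> n < m \<longrightarrow>
       modF (comm (pdo (TB n)) (Dop k m 0))
            (scaleo (real n / real m * real (m - n)) (mulv (TB (m - n))))) \<and>
    modF (comm (pdo (TB m)) (Dop k m 0)) (mulv (X 0)) \<and>
    (\<forall>n p. 1 \<le> n \<longrightarrow> int n < (int p - 1) * int m \<longrightarrow>
       modF (comm (Dop k m p) (mulv (TB n)))
            (scaleo (1 / real m) (pdo (TB (nat ((int p - 1) * int m - int n)))))) \<and>
    (\<forall>n p. 1 \<le> n \<longrightarrow> int n > (int p - 1) * int m \<longrightarrow>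
       modF (comm (Dop k m p) (mulv (TB n)))
            (scaleo (real_of_int (int n - (int p - 1) * int m) / real m)
                    (mulv (TB (nat (int n - (int p - 1) * int m)))))) \<and>
    (\<forall>n p. 1 \<le> n \<longrightarrow> int n = (int p - 1) * int m \<longrightarrow>
       modF (comm (Dop k m p) (mulv (TB n))) (scaleo (1 / real m) (mulv (X 0)))) \<and>
    (\<forall>p q. p + q > 1 \<longrightarrow>
       modF (comm (pdo (X q)) (Dop k m p))
            (\<lambda>f a. real q * pd (X (p + q - 1)) f a
                   + 1 / real k * pd (T ((p + q - 1) * k)) f a
                   + 1 / real m * pd (TB ((p + q - 1) * m)) f a)) \<and>
    (\<forall>p q. p + q = 1 \<longrightarrow>
       modF (comm (pdo (X q)) (Dop k m p))
            (\<lambda>f a. real q * pd (X 0) f a + (1 / real k + 1 / real m) * a (X 0) * f a)) \<and>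
    modF (comm (pdo (X 0)) (Dop k m 0)) (\<lambda>f a. (a (T k) + a (TB m)) * f a) \<and>
    (\<forall>p q. modF (comm (Dop k m p) (mulv (X q))) (\<lambda>f a. 0))"
    using C1[OF assms] C2[OF assms] C3[OF assms] C4[OF assms] C5[OF assms] C6[OF assms]
    CB1[OF assms] CB2[OF assms] CB3[OF assms] CB4[OF assms] CB5[OF assms] CB6[OF assms]
    C13[OF assms] C14[OF assms] C15[OF assms] C16[OF assms]
  by blast

end
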